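(* The restriction map $\mathrm{Res}:\mathfrak{P}(\mathfrak{h}^* )\to\mathfrak{P}(\mathfrak{a}^* )$ maps $\Lambda(\mathfrak{h}^* )$ onto $\Lambda^0(\mathfrak{a}^* )$.
   Context: Over $\mathbb{C}$, fix $p,q\ge1$, $\mathfrak{g}=\mathfrak{gl}(2p|2q)$; $A_{a,b}=E_{a,b}$ ($1\le a,b\le2p$), $D_{a,b}=E_{2p+a,2p+b}$ ($1\le a,b\le 2q$). With $\mathsf{i}=\sqrt{-1}$: $x_i=\mathsf{i}(A_{i,p+i}-A_{p+i,i})$, $x'_i=A_{i,i}+A_{p+i,p+i}$ ($1\le i\le p$), $y_j=\mathsf{i}(D_{j,q+j}-D_{q+j,j})$, $y'_j=D_{j,j}+D_{q+j,q+j}$ ($1\le j\le q$); $\mathfrak{a}=\mathrm{span}\{x_i,y_j\}$, $\mathfrak{t}_+=\mathrm{span}\{x'_i,y'_j\}$, $\mathfrak{h}=\mathfrak{a}\oplus\mathfrak{t}_+$. Identify $\mathfrak{a}^*$ with the functionals on $\mathfrak{h}$ vanishing on $\mathfrak{t}_+$, and $\mathfrak{P}(V^* )=\mathfrak{S}(V)$. Then $\mathfrak{P}(\mathfrak{h}^* )=\mathbb{C}[x_{\pm i},y_{\pm j}]$ with $x_{\pm i}=\tfrac12(x'_i\pm x_i)$, $y_{\pm j}=\tfrac12(y'_j\pm y_j)$, and $\mathfrak{P}(\mathfrak{a}^* )=\mathbb{C}[x_i,y_j]$; $\mathrm{Res}$ restricts a polynomial on $\mathfrak{h}^*$ to $\mathfrak{a}^*$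 (equivalently it is induced by the projection $\mathfrak{h}\to\mathfrak{a}$ along $\mathfrak{t}_+$). $\Lambda(\mathfrak{h}^* )$ consists of polynomials symmetric separately in the $2p$ variables $x_{\pm i}$ and in the $2q$ variables $y_{\pm j}$ such that $f|_{x_{+1}=t,\,y_{+1}=-t}$ is independent of $t$. $\Lambda^0(\mathfrak{a}^* )$ consists of $f\in\mathbb{C}[x_i,y_j]$ invariant under permutations of the $x_i$, permutations of the $y_j$, and sign changes of each variable, such that $f|_{x_1=t,\,y_1=-t}$ is independent of $t$. *)

theory Defs
  imports Complex_Main "HOL-Combinatorics.Permutations"
begin

text \<open>Variables. On h*: X k (k < 2p) with X (i-1) = x_{+i}, X (p+i-1) = x_{-i};
  Y k (k < 2q) with Y (j-1) = y_{+j}, Y (q+j-1) = y_{-j}.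
  On a*: X (i-1) = x_i (i \<le> p), Y (j-1) = y_j (j \<le> q).\<close>
datatype var = X nat | Y nat

text \<open>Polynomial functions over the complex numbers in the variables from V
  (over an infinite field these are the same as polynomials).\<close>
inductive_set mpoly_fun :: "var set \<Rightarrow> ((var \<Rightarrow> complex) \<Rightarrow> complex) set"
  for V :: "var set" where
  const: "(\<lambda>a. c) \<in> mpoly_fun V"
| var: "v \<in> V \<Longrightarrow> (\<lambda>a. a v) \<in> mpoly_fun V"
| add: "f \<in> mpoly_fun V \<Longrightarrow> g \<in> mpoly_fun V \<Longrightarrow> (\<lambda>a. f a + g a) \<in> mpoly_fun V"
| mult: "f \<in> mpoly_fun V \<Longrightarrow> g \<in> mpoly_fun V \<Longrightarrow> (\<lambda>a. f a * g a) \<in> mpoly_fun V"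

definition hvars :: "nat \<Rightarrow> nat \<Rightarrow> var set" where
  "hvars p q = X ` {..<2*p} \<union> Y ` {..<2*q}"

definition avars :: "nat \<Rightarrow> nat \<Rightarrow> var set" where
  "avars p q = X ` {..<p} \<union> Y ` {..<q}"

definition permX :: "(nat \<Rightarrow> nat) \<Rightarrow> (var \<Rightarrow> complex) \<Rightarrow> var \<Rightarrow> complex" where
  "permX \<sigma> a = (\<lambda>v. case v of X k \<Rightarrow> a (X (\<sigma> k)) | Y k \<Rightarrow> a (Y k))"

definition permY :: "(nat \<Rightarrow> nat) \<Rightarrow> (var \<Rightarrow> complex) \<Rightarrow> var \<Rightarrow> complex" where
  "permY \<sigma> a = (\<lambda>v. case v of X k \<Rightarrow> a (X k) | Y k \<Rightarrow> a (Y (\<sigma> k)))"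

definition Lambda_h :: "nat \<Rightarrow> nat \<Rightarrow> ((var \<Rightarrow> complex) \<Rightarrow> complex) set" where
  "Lambda_h p q = {f \<in> mpoly_fun (hvars p q).
      (\<forall>\<sigma> a. \<sigma> permutes {..<2*p} \<longrightarrow> f (permX \<sigma> a) = f a) \<and>
      (\<forall>\<sigma> a. \<sigma> permutes {..<2*q} \<longrightarrow> f (permY \<sigma> a) = f a) \<and>
      (\<forall>a t s. f (a(X 0 := t, Y 0 := - t)) = f (a(X 0 := s, Y 0 := - s)))}"

definition Lambda0_a :: "nat \<Rightarrow> nat \<Rightarrow> ((var \<Rightarrow> complex) \<Rightarrow> complex) set" where
  "Lambda0_a p q = {f \<in> mpoly_fun (avars p q).
      (\<forall>\<sigma> a. \<sigma> permutes {..<p} \<longrightarrow> f (permX \<sigma> a) = f a) \<and>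
      (\<forall>\<sigma> a. \<sigma> permutes {..<q} \<longrightarrow> f (permY \<sigma> a) = f a) \<and>
      (\<forall>v\<in>avars p q. \<forall>a. f (a(v := - a v)) = f a) \<and>
      (\<forall>a t s. f (a(X 0 := t, Y 0 := - t)) = f (a(X 0 := s, Y 0 := - s)))}"

text \<open>Restriction: induced by the projection h \<rightarrow> a along t_+, i.e. x'_i = y'_j = 0,
  so x_{\<pm>i} = \<pm> x_i/2, y_{\<pm>j} = \<pm> y_j/2.\<close>
definition restr_pt :: "nat \<Rightarrow> nat \<Rightarrow> (var \<Rightarrow> complex) \<Rightarrow> var \<Rightarrow> complex" where
  "restr_pt p q b = (\<lambda>v. case v of
      X k \<Rightarrow> (if k < p then b (X k) / 2 else - b (X (k - p)) / 2)
    | Y k \<Rightarrow> (if k < q then b (Y k) / 2 else - b (Y (k - q)) / 2))"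

definition Res :: "nat \<Rightarrow> nat \<Rightarrow> ((var \<Rightarrow> complex) \<Rightarrow> complex) \<Rightarrow> (var \<Rightarrow> complex) \<Rightarrow> complex" where
  "Res p q f = (\<lambda>b. f (restr_pt p q b))"

end

theory Submission
  imports Defs "Jordan_Normal_Form.Determinant" "HOL-Computational_Algebra.Formal_Power_Series"
    "HOL-Computational_Algebra.Polynomial_FPS"
begin

type_synonym pt = "var \<Rightarrow> complex"
type_synonym pf = "pt \<Rightarrow> complex"

definition ringset :: "pf set \<Rightarrow> bool" where
  "ringset S \<longleftrightarrow> (\<forall>c. (\<lambda>a. c) \<in> S) \<and> (\<forall>f\<in>S. \<forall>g\<in>S. (\<lambda>a. f a + g a) \<in> S) \<and> (\<forall>f\<in>S. \<forall>g\<in>S. (\<lambda>a. f a * g a) \<in> S)"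

lemma ringset_const: "ringset S \<Longrightarrow> (\<lambda>a. c) \<in> S"
  unfolding ringset_def by blast
lemma ringset_add: "ringset S \<Longrightarrow> f \<in> S \<Longrightarrow> g \<in> S \<Longrightarrow> (\<lambda>a. f a + g a) \<in> S"
  unfolding ringset_def by blast
lemma ringset_mult: "ringset S \<Longrightarrow> f \<in> S \<Longrightarrow> g \<in> S \<Longrightarrow> (\<lambda>a. f a * g a) \<in> S"
  unfolding ringset_def by blast
lemma ringset_cmult: "ringset S \<Longrightarrow> f \<in> S \<Longrightarrow> (\<lambda>a. c * f a) \<in> S"
  by (rule ringset_mult[OF _ ringset_const]) auto
lemma ringset_uminus: "ringset S \<Longrightarrow> f \<in> S \<Longrightarrow> (\<lambda>a. - f a) \<in> S"
  using ringset_cmult[of S f "-1"] by simp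
lemma ringset_diff: "ringset S \<Longrightarrow> f \<in> S \<Longrightarrow> g \<in> S \<Longrightarrow> (\<lambda>a. f a - g a) \<in> S"
  using ringset_add[OF _ _ ringset_uminus, of S f g] by simp
lemma ringset_sum: "ringset S \<Longrightarrow> (\<And>i. i \<in> I \<Longrightarrow> F i \<in> S) \<Longrightarrow> (\<lambda>a. \<Sum>i\<in>I. F i a) \<in> S"
proof (induction I rule: infinite_finite_induct)
  case (infinite A) then show ?case by (simp add: ringset_const)
next
  case empty then show ?case by (simp add: ringset_const)
next
  case (insert x F') then show ?case by (simp add: ringset_add)
qed
lemma ringset_prod: "ringset S \<Longrightarrow> (\<And>i. i \<in> I \<Longrightarrow> F i \<in> S) \<Longrightarrow> (\<lambda>a. \<Prod>i\<in>I. F i a) \<in> S"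
proof (induction I rule: infinite_finite_induct)
  case (infinite A) then show ?case by (simp add: ringset_const)
next
  case empty then show ?case by (simp add: ringset_const)
next
  case (insert x F') then show ?case by (simp add: ringset_mult)
qed
lemma ringset_power: "ringset S \<Longrightarrow> f \<in> S \<Longrightarrow> (\<lambda>a. f a ^ k) \<in> S"
  using ringset_prod[of S "{..<k}" "\<lambda>_. f"] by simp
lemma ringset_sum_list: "ringset S \<Longrightarrow> (\<And>x. x \<in> set xs \<Longrightarrow> F x \<in> S) \<Longrightarrow> (\<lambda>a. \<Sum>x\<leftarrow>xs. F x a) \<in> S"
  by (induction xs) (auto simp: ringset_const ringset_add)

lemma ringset_mpoly: "ringset (mpoly_fun V)"
  unfolding ringset_def by (auto intro: mpoly_fun.intros)

lemmas mp_const = ringset_const[OF ringset_mpoly]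
lemmas mp_add = ringset_add[OF ringset_mpoly]
lemmas mp_mult = ringset_mult[OF ringset_mpoly]
lemmas mp_cmult = ringset_cmult[OF ringset_mpoly]
lemmas mp_uminus = ringset_uminus[OF ringset_mpoly]
lemmas mp_diff = ringset_diff[OF ringset_mpoly]
lemmas mp_sum = ringset_sum[OF ringset_mpoly]
lemmas mp_prod = ringset_prod[OF ringset_mpoly]
lemmas mp_power = ringset_power[OF ringset_mpoly]
lemmas mp_sum_list = ringset_sum_list[OF ringset_mpoly]
lemma mp_var: "v \<in> V \<Longrightarrow> (\<lambda>a. a v) \<in> mpoly_fun V"
  by (rule mpoly_fun.var)

lemma mp_mono: "f \<in> mpoly_fun V \<Longrightarrow> V \<subseteq> W \<Longrightarrow> f \<in> mpoly_fun W"
  by (induction rule: mpoly_fun.induct) (auto intro: mpoly_fun.intros)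

lemma mp_subst:
  assumes "f \<in> mpoly_fun V" "\<And>v. v \<in> V \<Longrightarrow> (\<lambda>a. T a v) \<in> mpoly_fun W"
  shows "(\<lambda>a. f (T a)) \<in> mpoly_fun W"
  using assms by (induction rule: mpoly_fun.induct) (auto intro: mpoly_fun.intros)

lemma mp_local:
  assumes "f \<in> mpoly_fun V" "\<And>v. v \<in> V \<Longrightarrow> a v = b v"
  shows "f a = f b"
  using assms by (induction rule: mpoly_fun.induct) auto

lemma mp_empty: "f \<in> mpoly_fun {} \<Longrightarrow> f = (\<lambda>a. f a0)"
  using mp_local[of f "{}"] by auto

lemma mp_line: "f \<in> mpoly_fun V \<Longrightarrow> \<exists>P. \<forall>e. f (\<lambda>v. a v + e * b v) = poly P e"
proof (induction rule: mpoly_fun.induct)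
  case (const c) then show ?case by (intro exI[of _ "[:c:]"]) auto
next
  case (var v) then show ?case by (intro exI[of _ "[:a v, b v:]"]) (auto simp: algebra_simps)
next
  case (add f g) then obtain P Q where "\<forall>e. f (\<lambda>v. a v + e * b v) = poly P e" "\<forall>e. g (\<lambda>v. a v + e * b v) = poly Q e" by blast
  then show ?case by (intro exI[of _ "P + Q"]) auto
next
  case (mult f g) then obtain P Q where "\<forall>e. f (\<lambda>v. a v + e * b v) = poly P e" "\<forall>e. g (\<lambda>v. a v + e * b v) = poly Q e" by blast
  then show ?case by (intro exI[of _ "P * Q"]) auto
qed

lemma mp_line_zero:
  assumes "f \<in> mpoly_fun V" "finite S" "\<And>e. e \<notin> S \<Longrightarrow> f (\<lambda>v. a v + e * b v) = 0"
  shows "f a = 0"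
proof -
  obtain P where P: "\<And>e. f (\<lambda>v. a v + e * b v) = poly P e" using mp_line[OF assms(1)] by blast
  have "P = 0"
  proof (rule ccontr)
    assume "P \<noteq> 0"
    then have "finite {x. poly P x = 0}" by (rule poly_roots_finite)
    moreover have "- S \<subseteq> {x. poly P x = 0}" using assms(3) P by auto
    ultimately have "finite (- S)" by (rule finite_subset[rotated])
    with assms(2) have "finite (UNIV :: complex set)"
      by (metis Compl_partition2 finite_UnI)
    then show False by (simp add: infinite_UNIV_char_0)
  qed
  have "f (\<lambda>v. a v + 0 * b v) = 0" using P[of 0] \<open>P = 0\<close> by simp
  moreover have "(\<lambda>v. a v + 0 * b v) = a" by simp
  ultimately show ?thesis by simp
qed

lemma mp_line_eq:
  assumes "f \<in> mpoly_fun V" "g \<in> mpoly_fun V" "finite S" "\<And>e. e \<notin> S \<Longrightarrow> f (\<lambda>v. a v + e * b v) = g (\<lambda>v. a v + e * b v)"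
  shows "f a = g a"
  using mp_line_zero[OF mp_diff[OF assms(1,2)] assms(3), of a b] assms(4) by auto

lemma mp_upd_var: "v \<in> V \<Longrightarrow> (\<lambda>a. L a) \<in> mpoly_fun V \<Longrightarrow> (\<lambda>a. (a(w := L a)) v) \<in> mpoly_fun V"
  by (cases "v = w") (simp_all add: mp_var)

lemma mp_div_lemma:
  assumes "f \<in> mpoly_fun V" "w \<in> V" "(\<lambda>a. L a) \<in> mpoly_fun V"
  shows "\<exists>g\<in>mpoly_fun V. \<forall>a. f a = f (a(w := L a)) + (a w - L a) * g a"
  using assms
proof (induction rule: mpoly_fun.induct)
  case (const c) show ?case by (rule bexI[of _ "\<lambda>a. 0"]) (auto intro: mp_const)
next
  case (var v)
  show ?case
  proof (cases "v = w")
    case True then show ?thesis by (intro bexI[of _ "\<lambda>a. 1"]) (auto intro: mp_const)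
  next
    case False then show ?thesis by (intro bexI[of _ "\<lambda>a. 0"]) (auto intro: mp_const)
  qed
next
  case (add f g)
  then obtain g1 g2 where G: "g1 \<in> mpoly_fun V" "g2 \<in> mpoly_fun V"
    "\<And>a. f a = f (a(w := L a)) + (a w - L a) * g1 a" "\<And>a. g a = g (a(w := L a)) + (a w - L a) * g2 a" by blast
  have e: "\<forall>a. f a + g a = (f (a(w := L a)) + g (a(w := L a))) + (a w - L a) * (g1 a + g2 a)"
  proof
    fix a show "f a + g a = (f (a(w := L a)) + g (a(w := L a))) + (a w - L a) * (g1 a + g2 a)"
      by (subst G(3), subst G(4)) (simp add: distrib_left)
  qed
  have "(\<lambda>a. g1 a + g2 a) \<in> mpoly_fun V" using G(1,2) by (rule mp_add)
  then show ?case
    apply (rule bexI[where x="\<lambda>a. g1 a + g2 a", rotated])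
    using e by blast
next
  case (mult f g)
  then obtain g1 g2 where G: "g1 \<in> mpoly_fun V" "g2 \<in> mpoly_fun V"
    "\<And>a. f a = f (a(w := L a)) + (a w - L a) * g1 a" "\<And>a. g a = g (a(w := L a)) + (a w - L a) * g2 a" by blast
  have s1: "(\<lambda>a. f (a(w := L a))) \<in> mpoly_fun V"
    by (rule mp_subst[OF mult(1)]) (rule mp_upd_var, assumption, rule mult.prems(2))
  have s2: "(\<lambda>a. g (a(w := L a))) \<in> mpoly_fun V"
    by (rule mp_subst[OF mult(2)]) (rule mp_upd_var, assumption, rule mult.prems(2))
  have d: "(\<lambda>a. a w - L a) \<in> mpoly_fun V" using mult by (auto intro!: mp_diff mp_var)
  let ?g = "\<lambda>a. g1 a * g (a(w := L a)) + f (a(w := L a)) * g2 a + (a w - L a) * g1 a * g2 a"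
  have "?g \<in> mpoly_fun V" using G(1,2) s1 s2 d by (intro mp_add mp_mult) auto
  moreover have "f a * g a = f (a(w := L a)) * g (a(w := L a)) + (a w - L a) * ?g a" for a
    by (subst G(3), subst G(4)) (simp add: algebra_simps)
  ultimately show ?case
    apply (intro bexI[where x="?g", rotated])
    by blast+
qed

lemma mp_div:
  assumes "f \<in> mpoly_fun V" "w \<in> V" "(\<lambda>a. L a) \<in> mpoly_fun V"
    and "\<And>a. a w = L a \<Longrightarrow> f a = 0" and "\<And>a c. L (a(w := c)) = L a"
  shows "\<exists>g\<in>mpoly_fun V. f = (\<lambda>a. (a w - L a) * g a)"
proof -
  obtain g where g: "g \<in> mpoly_fun V" "\<forall>a. f a = f (a(w := L a)) + (a w - L a) * g a"
    using mp_div_lemma[OF assms(1-3)] by blast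
  have z: "f (a(w := L a)) = 0" for a
    using assms(4)[of "a(w := L a)"] assms(5)[of a "L a"] by simp
  have "f a = (a w - L a) * g a" for a
    using g(2)[rule_format, of a] z[of a] by simp
  with g(1) show ?thesis by (intro bexI[of _ g]) auto
qed

lemma coeff_mult:
  assumes "ringset S" "\<And>k. (\<lambda>a. fps_nth (F a) k) \<in> S" "\<And>k. (\<lambda>a. fps_nth (G a) k) \<in> S"
  shows "(\<lambda>a. fps_nth (F a * G a) k) \<in> S"
  unfolding fps_mult_nth using assms by (intro ringset_sum ringset_mult) auto

lemma coeff_one: "ringset S \<Longrightarrow> (\<lambda>a. fps_nth (1::complex fps) k) \<in> S"
  by (rule ringset_const)

lemma coeff_prod:
  assumes "ringset S" "\<And>i k. i \<in> I \<Longrightarrow> (\<lambda>a. fps_nth (F i a) k) \<in> S"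
  shows "(\<lambda>a. fps_nth (\<Prod>i\<in>I. F i a) k) \<in> S"
  using assms(2)
proof (induction I arbitrary: k rule: infinite_finite_induct)
  case (infinite A) then show ?case using coeff_one[OF assms(1)] by simp
next
  case empty then show ?case using coeff_one[OF assms(1)] by simp
next
  case (insert x A)
  have "(\<lambda>a. fps_nth (F x a * (\<Prod>i\<in>A. F i a)) k) \<in> S"
    by (rule coeff_mult[OF assms(1)]) (use insert in auto)
  then show ?case using insert by simp
qed

lemma coeff_inverse:
  assumes "ringset S" "\<And>k. (\<lambda>a. fps_nth (F a) k) \<in> S" "\<And>a. fps_nth (F a) 0 = 1"
  shows "(\<lambda>a. fps_nth (inverse (F a)) k) \<in> S"
proof (induction k rule: less_induct)
  case (less k)
  show ?case
  proof (cases k)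
    case 0 then show ?thesis using assms(3) by (simp add: ringset_const[OF assms(1)])
  next
    case (Suc k')
    have eq: "fps_nth (inverse (F a)) k = - (\<Sum>i\<in>{1..k}. fps_nth (F a) i * fps_nth (inverse (F a)) (k - i))" for a
    proof -
      have "fps_nth (F a * inverse (F a)) k = 0" using inverse_mult_eq_1'[of "F a"] assms(3) Suc by simp
      then have "(\<Sum>i=0..k. fps_nth (F a) i * fps_nth (inverse (F a)) (k - i)) = 0" by (simp add: fps_mult_nth)
      moreover have "{0..k} = insert 0 {1..k}" by auto
      ultimately show ?thesis using assms(3)[of a] by (simp add: eq_neg_iff_add_eq_0 add.commute)
    qed
    have "(\<lambda>a. - (\<Sum>i\<in>{1..k}. fps_nth (F a) i * fps_nth (inverse (F a)) (k - i))) \<in> S"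
      using less Suc by (intro ringset_uminus[OF assms(1)] ringset_sum[OF assms(1)] ringset_mult[OF assms(1)] assms(2)) auto
    then show ?thesis by (subst eq)
  qed
qed

lemma coeff_lin:
  assumes "ringset S" "L \<in> S"
  shows "(\<lambda>a. fps_nth (1 - fps_const (L a) * fps_X) k) \<in> S"
proof -
  have "(\<lambda>a. fps_nth (1 - fps_const (L a) * fps_X) k) = (\<lambda>a. (if k = 0 then 1 else 0) - (if k = 1 then L a else 0))"
    by (auto simp: fps_X_def)
  also have "\<dots> \<in> S"
    by (cases "k = 1") (auto intro!: ringset_diff[OF assms(1)] ringset_const[OF assms(1)] ringset_uminus[OF assms(1)] assms(2))
  finally show ?thesis .
qed

definition vars :: "nat \<Rightarrow> nat \<Rightarrow> var set" where
  "vars n m = X ` {..<n} \<union> Y ` {..<m}"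

definition genfps :: "nat \<Rightarrow> nat \<Rightarrow> pt \<Rightarrow> complex fps" where
  "genfps n m a = (\<Prod>i<n. 1 - fps_const (a (X i)) * fps_X) * inverse (\<Prod>j<m. 1 - fps_const (a (Y j)) * fps_X)"

definition Egen :: "nat \<Rightarrow> nat \<Rightarrow> nat \<Rightarrow> pf" where
  "Egen n m r = (\<lambda>a. fps_nth (genfps n m a) r)"

lemma prod_lin_0: "fps_nth (\<Prod>i\<in>I. 1 - fps_const (c i) * fps_X) 0 = (1::complex)"
  by (induction I rule: infinite_finite_induct) auto

lemma coeff_genfps:
  assumes "ringset S" "\<And>i. i < n \<Longrightarrow> (\<lambda>a. a (X i)) \<in> S" "\<And>j. j < m \<Longrightarrow> (\<lambda>a. a (Y j)) \<in> S"
  shows "Egen n m r \<in> S"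
  unfolding Egen_def genfps_def
  by (intro coeff_mult[OF assms(1)] coeff_prod[OF assms(1)] coeff_inverse[OF assms(1)] coeff_lin[OF assms(1)])
     (auto simp: prod_lin_0 intro: assms(2,3))

lemma Egen_mpoly: "Egen n m r \<in> mpoly_fun (vars n m)"
  by (rule coeff_genfps[OF ringset_mpoly]) (auto simp: vars_def intro: mp_var)

inductive_set Alg :: "nat \<Rightarrow> nat \<Rightarrow> pf set" for n m where
  const: "(\<lambda>a. c) \<in> Alg n m"
| gen: "Egen n m r \<in> Alg n m"
| add: "f \<in> Alg n m \<Longrightarrow> g \<in> Alg n m \<Longrightarrow> (\<lambda>a. f a + g a) \<in> Alg n m"
| mult: "f \<in> Alg n m \<Longrightarrow> g \<in> Alg n m \<Longrightarrow> (\<lambda>a. f a * g a) \<in> Alg n m"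

lemma ringset_Alg: "ringset (Alg n m)"
  unfolding ringset_def by (auto intro: Alg.intros)

lemma Alg_mpoly: "f \<in> Alg n m \<Longrightarrow> f \<in> mpoly_fun (vars n m)"
  by (induction rule: Alg.induct) (auto intro: mp_const mp_add mp_mult Egen_mpoly)

definition symX :: "nat \<Rightarrow> pf \<Rightarrow> bool" where
  "symX n f \<longleftrightarrow> (\<forall>\<sigma> a. \<sigma> permutes {..<n} \<longrightarrow> f (permX \<sigma> a) = f a)"
definition symY :: "nat \<Rightarrow> pf \<Rightarrow> bool" where
  "symY m f \<longleftrightarrow> (\<forall>\<sigma> a. \<sigma> permutes {..<m} \<longrightarrow> f (permY \<sigma> a) = f a)"
definition super :: "nat \<Rightarrow> nat \<Rightarrow> pf \<Rightarrow> bool" where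
  "super n m f \<longleftrightarrow> (0 < n \<longrightarrow> 0 < m \<longrightarrow> (\<forall>a s t. f (a(X 0 := s, Y 0 := s)) = f (a(X 0 := t, Y 0 := t))))"

lemma permX_X [simp]: "permX \<sigma> a (X k) = a (X (\<sigma> k))" and permX_Y [simp]: "permX \<sigma> a (Y k) = a (Y k)"
  by (auto simp: permX_def)
lemma permY_X [simp]: "permY \<sigma> a (X k) = a (X k)" and permY_Y [simp]: "permY \<sigma> a (Y k) = a (Y (\<sigma> k))"
  by (auto simp: permY_def)

lemma genfps_permX: "\<sigma> permutes {..<n} \<Longrightarrow> genfps n m (permX \<sigma> a) = genfps n m a"
  unfolding genfps_def
  using prod.permute[of \<sigma> "{..<n}" "\<lambda>i. 1 - fps_const (a (X i)) * fps_X"]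
  by (simp add: o_def)
lemma genfps_permY: "\<sigma> permutes {..<m} \<Longrightarrow> genfps n m (permY \<sigma> a) = genfps n m a"
  unfolding genfps_def
  using prod.permute[of \<sigma> "{..<m}" "\<lambda>i. 1 - fps_const (a (Y i)) * fps_X"]
  by (simp add: o_def)

lemma genfps_super:
  assumes "0 < n" "0 < m"
  shows "genfps n m (a(X 0 := s, Y 0 := s)) = (\<Prod>i\<in>{1..<n}. 1 - fps_const (a (X i)) * fps_X) * inverse (\<Prod>j\<in>{1..<m}. 1 - fps_const (a (Y j)) * fps_X)"
proof -
  have n: "{..<n} = insert 0 {1..<n}" and m: "{..<m} = insert 0 {1..<m}" using assms by auto
  let ?A = "\<Prod>i\<in>{1..<n}. 1 - fps_const (a (X i)) * fps_X"
  let ?B = "\<Prod>j\<in>{1..<m}. 1 - fps_const (a (Y j)) * fps_X"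
  let ?l = "1 - fps_const s * fps_X :: complex fps"
  have A: "(\<Prod>i<n. 1 - fps_const ((a(X 0 := s, Y 0 := s)) (X i)) * fps_X) = ?l * ?A"
    unfolding n by (subst prod.insert) (auto intro!: prod.cong)
  have B: "(\<Prod>j<m. 1 - fps_const ((a(X 0 := s, Y 0 := s)) (Y j)) * fps_X) = ?l * ?B"
    unfolding m by (subst prod.insert) (auto intro!: prod.cong)
  have l: "?l * inverse ?l = 1" by (rule inverse_mult_eq_1') simp
  have "?l * ?A * (inverse ?l * inverse ?B) = (?l * inverse ?l) * (?A * inverse ?B)"
    by (simp only: mult_ac)
  then show ?thesis unfolding genfps_def A B fps_inverse_mult l by simp
qed

lemma Egen_sym: "symX n (Egen n m r)" "symY m (Egen n m r)" "super n m (Egen n m r)"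
  unfolding symX_def symY_def super_def Egen_def by (auto simp: genfps_permX genfps_permY genfps_super)

lemma super_add: "super n m f \<Longrightarrow> super n m g \<Longrightarrow> super n m (\<lambda>a. f a + g a)"
  unfolding super_def by metis
lemma super_mult: "super n m f \<Longrightarrow> super n m g \<Longrightarrow> super n m (\<lambda>a. f a * g a)"
  unfolding super_def by metis
lemma super_const: "super n m (\<lambda>a. c)"
  unfolding super_def by simp

lemma Alg_sym: "f \<in> Alg n m \<Longrightarrow> symX n f \<and> symY m f \<and> super n m f"
proof (induction rule: Alg.induct)
  case (const c) then show ?case by (simp add: symX_def symY_def super_const)
next
  case (gen r) then show ?case using Egen_sym by blast
next
  case (add f g) then show ?case by (simp add: symX_def symY_def super_add)
next
  case (mult f g) then show ?case by (simp add: symX_def symY_def super_mult)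
qed

lemma genfps_lift: "genfps (Suc n) m (a(X n := 0)) = genfps n m a"
  unfolding genfps_def lessThan_Suc by (subst prod.insert) (auto intro!: prod.cong)

lemma Alg_lift:
  assumes "g \<in> Alg n m"
  shows "\<exists>G\<in>Alg (Suc n) m. \<forall>a. G (a(X n := 0)) = g a"
  using assms
proof (induction rule: Alg.induct)
  case (const c) then show ?case by (intro bexI[of _ "\<lambda>a. c"]) (auto intro: Alg.intros)
next
  case (gen r)
  have "\<forall>a. Egen (Suc n) m r (a(X n := 0)) = Egen n m r a"
    by (simp add: Egen_def genfps_lift del: fun_upd_apply)
  then show ?case using Alg.gen[of "Suc n" m r] by blast
next
  case (add f g)
  then obtain F G where "F \<in> Alg (Suc n) m" "G \<in> Alg (Suc n) m" "\<forall>a. F (a(X n := 0)) = f a" "\<forall>a. G (a(X n := 0)) = g a" by blast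
  then have FG: "F \<in> Alg (Suc n) m" "G \<in> Alg (Suc n) m" "\<And>a. F (a(X n := 0)) = f a" "\<And>a. G (a(X n := 0)) = g a" by blast+
  have "\<forall>a. F (a(X n := 0)) + G (a(X n := 0)) = f a + g a" by (intro allI) (simp only: FG)
  moreover have "(\<lambda>a. F a + G a) \<in> Alg (Suc n) m" using FG(1,2) by (rule Alg.intros)
  ultimately show ?case by (rule bexI[where x="\<lambda>a. F a + G a"])
next
  case (mult f g)
  then obtain F G where "F \<in> Alg (Suc n) m" "G \<in> Alg (Suc n) m" "\<forall>a. F (a(X n := 0)) = f a" "\<forall>a. G (a(X n := 0)) = g a" by blast
  then have FG: "F \<in> Alg (Suc n) m" "G \<in> Alg (Suc n) m" "\<And>a. F (a(X n := 0)) = f a" "\<And>a. G (a(X n := 0)) = g a" by blast+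
  have "\<forall>a. F (a(X n := 0)) * G (a(X n := 0)) = f a * g a" by (intro allI) (simp only: FG)
  moreover have "(\<lambda>a. F a * G a) \<in> Alg (Suc n) m" using FG(1,2) by (rule Alg.intros)
  ultimately show ?case by (rule bexI[where x="\<lambda>a. F a * G a"])
qed

definition mon :: "var set \<Rightarrow> (var \<Rightarrow> nat) \<Rightarrow> pt \<Rightarrow> complex" where
  "mon W \<beta> a = (\<Prod>w\<in>W. a w ^ \<beta> w)"

lemma mon_add: "mon W (\<lambda>w. \<beta>1 w + \<beta>2 w) a = mon W \<beta>1 a * mon W \<beta>2 a"
  unfolding mon_def by (simp add: power_add prod.distrib)

lemma mon_zero: "mon W (\<lambda>w. 0) a = 1"
  unfolding mon_def by simp

lemma mon_single: "finite W \<Longrightarrow> v \<in> W \<Longrightarrow> mon W (\<lambda>w. if w = v then 1 else 0) a = a v"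
proof -
  assume "finite W" "v \<in> W"
  have "mon W (\<lambda>w. if w = v then 1 else 0) a = (\<Prod>w\<in>W. if w = v then a w else 1)"
    unfolding mon_def by (intro prod.cong) auto
  also have "\<dots> = a v" using \<open>finite W\<close> \<open>v \<in> W\<close> by (simp add: prod.delta)
  finally show ?thesis .
qed

lemma sum_list_times:
  fixes f g :: "_ \<Rightarrow> complex"
  shows "(\<Sum>x\<leftarrow>xs. f x) * (\<Sum>y\<leftarrow>ys. g y) = sum_list (concat (map (\<lambda>x. map (\<lambda>y. f x * g y) ys) xs))"
proof (induction xs)
  case Nil then show ?case by simp
next
  case (Cons x xs)
  have "(\<Sum>y\<leftarrow>ys. f x * g y) = f x * (\<Sum>y\<leftarrow>ys. g y)"
    by (induction ys) (auto simp: algebra_simps)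
  with Cons show ?case by (simp add: algebra_simps)
qed

lemma mp_expand:
  assumes "f \<in> mpoly_fun V" "V \<subseteq> U \<union> W" "finite W"
  shows "\<exists>L. (\<forall>x\<in>set L. fst x \<in> mpoly_fun U) \<and> (\<forall>a. f a = (\<Sum>x\<leftarrow>L. fst x a * mon W (snd x) a))"
  using assms(1,2)
proof (induction rule: mpoly_fun.induct)
  case (const c)
  show ?case by (intro exI[of _ "[(\<lambda>a. c, \<lambda>w. 0)]"]) (auto simp: mon_zero mp_const)
next
  case (var v)
  show ?case
  proof (cases "v \<in> W")
    case True
    show ?thesis by (intro exI[of _ "[(\<lambda>a. 1, \<lambda>w. if w = v then 1 else 0)]"])
      (auto simp: mon_single[OF assms(3) True] mp_const)
  next
    case False
    with var have "v \<in> U" by auto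
    show ?thesis by (intro exI[of _ "[(\<lambda>a. a v, \<lambda>w. 0)]"]) (auto simp: mon_zero mp_var \<open>v \<in> U\<close>)
  qed
next
  case (add f g)
  then obtain L1 L2 where L: "\<forall>x\<in>set L1. fst x \<in> mpoly_fun U" "\<forall>a. f a = (\<Sum>x\<leftarrow>L1. fst x a * mon W (snd x) a)"
    "\<forall>x\<in>set L2. fst x \<in> mpoly_fun U" "\<forall>a. g a = (\<Sum>x\<leftarrow>L2. fst x a * mon W (snd x) a)" by blast
  show ?case by (intro exI[of _ "L1 @ L2"]) (use L in auto)
next
  case (mult f g)
  then obtain L1 L2 where L: "\<forall>x\<in>set L1. fst x \<in> mpoly_fun U" "\<forall>a. f a = (\<Sum>x\<leftarrow>L1. fst x a * mon W (snd x) a)"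
    "\<forall>x\<in>set L2. fst x \<in> mpoly_fun U" "\<forall>a. g a = (\<Sum>x\<leftarrow>L2. fst x a * mon W (snd x) a)" by blast
  let ?L = "concat (map (\<lambda>x. map (\<lambda>y. (\<lambda>a. fst x a * fst y a, \<lambda>w. snd x w + snd y w)) L2) L1)"
  have "\<forall>z\<in>set ?L. fst z \<in> mpoly_fun U" using L(1,3) by (auto intro: mp_mult)
  moreover have "f a * g a = (\<Sum>z\<leftarrow>?L. fst z a * mon W (snd z) a)" for a
  proof -
    have "f a * g a = (\<Sum>x\<leftarrow>L1. fst x a * mon W (snd x) a) * (\<Sum>y\<leftarrow>L2. fst y a * mon W (snd y) a)"
      using L(2,4) by simp
    also have "\<dots> = sum_list (concat (map (\<lambda>x. map (\<lambda>y. (fst x a * mon W (snd x) a) * (fst y a * mon W (snd y) a)) L2) L1))"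
      by (rule sum_list_times)
    also have "\<dots> = (\<Sum>z\<leftarrow>?L. fst z a * mon W (snd z) a)"
      by (simp add: map_concat o_def mon_add algebra_simps)
    finally show ?thesis .
  qed
  ultimately show ?case by blast
qed

definition alt :: "nat \<Rightarrow> (nat \<Rightarrow> nat) \<Rightarrow> pt \<Rightarrow> complex" where
  "alt m \<beta> a = (\<Sum>p\<in>{p. p permutes {..<m}}. of_int (sign p) * (\<Prod>i<m. a (Y (p i)) ^ \<beta> i))"

lemma alt_mpoly: "alt m \<beta> \<in> mpoly_fun (Y ` {..<m})"
proof -
  have "(\<lambda>a. \<Sum>p\<in>{p. p permutes {..<m}}. of_int (sign p) * (\<Prod>i<m. a (Y (p i)) ^ \<beta> i)) \<in> mpoly_fun (Y ` {..<m})"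
  proof (intro mp_sum mp_mult mp_const mp_prod mp_power mp_var)
    fix p i assume "p \<in> {p. p permutes {..<m}}" "i \<in> {..<m}"
    then show "Y (p i) \<in> Y ` {..<m}" using permutes_in_image[of p "{..<m}" i] by auto
  qed
  then show ?thesis unfolding alt_def[abs_def] .
qed

lemma alt_perm:
  assumes "\<sigma> permutes {..<m}"
  shows "alt m \<beta> (permY \<sigma> a) = of_int (sign \<sigma>) * alt m \<beta> a"
proof -
  let ?P = "{p. p permutes {..<m}}"
  let ?f = "\<lambda>p. of_int (sign p) * (\<Prod>i<m. a (Y (\<sigma> (p i))) ^ \<beta> i) :: complex"
  have isg: "Hilbert_Choice.inv \<sigma> permutes {..<m}" using assms by (rule permutes_inv)
  have "alt m \<beta> (permY \<sigma> a) = sum ?f ?P" unfolding alt_def by simp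
  also have "\<dots> = sum (\<lambda>p. ?f (Hilbert_Choice.inv \<sigma> \<circ> p)) ?P"
    by (rule setum_permutations_compose_left[OF isg])
  also have "\<dots> = sum (\<lambda>p. of_int (sign \<sigma>) * (of_int (sign p) * (\<Prod>i<m. a (Y (p i)) ^ \<beta> i))) ?P"
  proof (rule sum.cong)
    fix p assume "p \<in> ?P"
    then have p: "p permutes {..<m}" by simp
    have "sign (Hilbert_Choice.inv \<sigma> \<circ> p) = sign (Hilbert_Choice.inv \<sigma>) * sign p"
      by (rule sign_compose) (use isg p in \<open>auto simp: permutation_permutes\<close>)
    also have "\<dots> = sign \<sigma> * sign p"
      using sign_inverse[of \<sigma>] assms by (metis finite_lessThan permutation_permutes)
    finally have s: "sign (Hilbert_Choice.inv \<sigma> \<circ> p) = sign \<sigma> * sign p" .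
    have "\<sigma> (Hilbert_Choice.inv \<sigma> (p i)) = p i" for i using permutes_inverses(1)[OF assms] by simp
    then show "?f (Hilbert_Choice.inv \<sigma> \<circ> p) = of_int (sign \<sigma>) * (of_int (sign p) * (\<Prod>i<m. a (Y (p i)) ^ \<beta> i))"
      by (simp add: s)
  qed simp
  also have "\<dots> = of_int (sign \<sigma>) * alt m \<beta> a"
    unfolding alt_def by (simp add: sum_distrib_left)
  finally show ?thesis .
qed

lemma sum_sum_list_swap: "(\<Sum>s\<in>S. \<Sum>x\<leftarrow>xs. g s x) = (\<Sum>x\<leftarrow>xs. \<Sum>s\<in>S. g s x)"
  by (induction xs) (auto simp: sum.distrib)

lemma mon_permY:
  "mon (Y ` {..<m}) \<beta> (permY \<sigma> a) = (\<Prod>j<m. a (Y (\<sigma> j)) ^ \<beta> (Y j))"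
proof -
  have "mon (Y ` {..<m}) \<beta> (permY \<sigma> a) = (\<Prod>j<m. (permY \<sigma> a) (Y j) ^ \<beta> (Y j))"
    unfolding mon_def by (subst prod.reindex) (auto simp: inj_on_def)
  then show ?thesis by simp
qed

lemma antisym_alt:
  assumes "P \<in> mpoly_fun (Y ` {..<m})"
    and "\<And>\<sigma> a. \<sigma> permutes {..<m} \<Longrightarrow> P (permY \<sigma> a) = of_int (sign \<sigma>) * P a"
  shows "\<exists>L::(complex \<times> (nat \<Rightarrow> nat)) list. \<forall>a. P a = (\<Sum>x\<leftarrow>L. fst x * alt m (snd x) a) / fact m"
proof -
  obtain L0 where L0: "\<forall>x\<in>set L0. fst x \<in> mpoly_fun {}"
    "\<forall>a. P a = (\<Sum>x\<leftarrow>L0. fst x a * mon (Y ` {..<m}) (snd x) a)"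
    using mp_expand[OF assms(1), of "{}" "Y ` {..<m}"] by auto
  define L where "L = map (\<lambda>x. (fst x undefined, \<lambda>i. snd x (Y i))) L0"
  let ?P = "{p. p permutes {..<m}}"
  have c: "fst x a = fst x undefined" if "x \<in> set L0" for x a
    using mp_empty[of "fst x" undefined] L0(1) that by metis
  have L0': "P a = (\<Sum>x\<leftarrow>L0. fst x undefined * mon (Y ` {..<m}) (snd x) a)" for a
  proof -
    have "P a = (\<Sum>x\<leftarrow>L0. fst x a * mon (Y ` {..<m}) (snd x) a)" using L0(2) by blast
    also have "\<dots> = (\<Sum>x\<leftarrow>L0. fst x undefined * mon (Y ` {..<m}) (snd x) a)"
      by (intro arg_cong[where f=sum_list] map_cong refl) (use c in metis)
    finally show ?thesis .
  qed
  have "fact m * P a = (\<Sum>x\<leftarrow>L. fst x * alt m (snd x) a)" for a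
  proof -
    have "fact m * P a = (\<Sum>\<sigma>\<in>?P. P a)"
      by (simp add: card_permutations)
    also have "\<dots> = (\<Sum>\<sigma>\<in>?P. of_int (sign \<sigma>) * P (permY \<sigma> a))"
    proof (rule sum.cong)
      fix \<sigma> assume "\<sigma> \<in> ?P"
      then have "P (permY \<sigma> a) = of_int (sign \<sigma>) * P a" using assms(2) by simp
      moreover have "(of_int (sign \<sigma>) :: complex) * of_int (sign \<sigma>) = 1"
        by (metis of_int_1 of_int_mult sign_idempotent)
      ultimately show "P a = of_int (sign \<sigma>) * P (permY \<sigma> a)"
        by (metis mult.assoc mult_1)
    qed simp
    also have "\<dots> = (\<Sum>\<sigma>\<in>?P. \<Sum>x\<leftarrow>L0. of_int (sign \<sigma>) * (fst x undefined * mon (Y ` {..<m}) (snd x) (permY \<sigma> a)))"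
      unfolding L0' by (simp add: sum_list_const_mult)
    also have "\<dots> = (\<Sum>x\<leftarrow>L0. \<Sum>\<sigma>\<in>?P. of_int (sign \<sigma>) * (fst x undefined * mon (Y ` {..<m}) (snd x) (permY \<sigma> a)))"
      by (rule sum_sum_list_swap)
    also have "\<dots> = (\<Sum>x\<leftarrow>L0. fst x undefined * alt m (\<lambda>i. snd x (Y i)) a)"
      unfolding alt_def mon_permY
      by (intro arg_cong[where f=sum_list] map_cong refl) (simp add: sum_distrib_left algebra_simps)
    also have "\<dots> = (\<Sum>x\<leftarrow>L. fst x * alt m (snd x) a)"
      unfolding L_def by (simp add: o_def)
    finally show ?thesis .
  qed
  then show ?thesis by (intro exI[of _ L]) (auto simp: field_simps)
qed

lemma inv_lin: "inverse (1 - fps_const c * fps_X :: complex fps) = Abs_fps (\<lambda>k. c ^ k)"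
proof (rule fps_inverse_unique)
  let ?A = "Abs_fps (\<lambda>k. c ^ k) :: complex fps"
  have "(1 - fps_const c * fps_X) * ?A = ?A - fps_const c * (fps_X * ?A)" by (simp add: algebra_simps)
  also have "\<dots> = 1"
  proof (rule fps_ext)
    fix k show "fps_nth (?A - fps_const c * (fps_X * ?A)) k = fps_nth 1 k"
      by (cases k) auto
  qed
  finally show "(1 - fps_const c * fps_X) * ?A = 1" .
qed

lemma coeff_lin_quot:
  fixes c :: complex
  shows "n \<le> N \<Longrightarrow> fps_nth ((\<Prod>i<n. 1 - fps_const (u i) * fps_X) * inverse (1 - fps_const c * fps_X)) N
     = c ^ (N - n) * (\<Prod>i<n. (c - u i))"
proof (induction n arbitrary: N)
  case 0
  have "fps_nth (inverse (1 - fps_const c * fps_X)) N = c ^ N"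
    by (subst inv_lin) simp
  then show ?case by simp
next
  case (Suc n)
  let ?G = "(\<Prod>i<n. 1 - fps_const (u i) * fps_X) * inverse (1 - fps_const c * fps_X)"
  have e: "(\<Prod>i<Suc n. 1 - fps_const (u i) * fps_X) * inverse (1 - fps_const c * fps_X) = ?G - fps_const (u n) * (fps_X * ?G)"
    by (simp add: algebra_simps)
  obtain N' where N: "N = Suc N'" using Suc.prems by (cases N) auto
  have "n \<le> N'" using Suc.prems N by simp
  have "fps_nth (?G - fps_const (u n) * (fps_X * ?G)) N = fps_nth ?G N - u n * fps_nth ?G N'"
    by (simp add: N)
  also have "\<dots> = c ^ (N - n) * (\<Prod>i<n. (c - u i)) - u n * (c ^ (N' - n) * (\<Prod>i<n. (c - u i)))"
    using Suc.IH[of N] Suc.IH[of N'] Suc.prems \<open>n \<le> N'\<close> by simp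
  also have "c ^ (N - n) = c * c ^ (N' - n)" using \<open>n \<le> N'\<close> N by (simp add: Suc_diff_le)
  also have "c * c ^ (N' - n) * (\<Prod>i<n. (c - u i)) - u n * (c ^ (N' - n) * (\<Prod>i<n. (c - u i)))
      = c ^ (N - Suc n) * (\<Prod>i<Suc n. (c - u i))"
    using N by (simp add: algebra_simps)
  finally show ?case using e by simp
qed

definition Cf :: "(nat \<Rightarrow> complex) \<Rightarrow> nat \<Rightarrow> nat \<Rightarrow> complex" where
  "Cf v m j = 1 / (\<Prod>l\<in>{..<m}-{j}. (v j - v l))"

definition goodv :: "(nat \<Rightarrow> complex) \<Rightarrow> nat \<Rightarrow> bool" where
  "goodv v m \<longleftrightarrow> (\<forall>j<m. v j \<noteq> 0) \<and> (\<forall>j<m. \<forall>l<m. j \<noteq> l \<longrightarrow> v j \<noteq> v l)"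

lemma pf_poly:
  assumes "1 \<le> m" "goodv v m"
  shows "(\<Sum>j<m. smult (Cf v m j) (\<Prod>l\<in>{..<m}-{j}. [:1, - v l:])) - monom 1 (m - 1) = 0"
proof (rule ccontr)
  define p where "p = (\<Sum>j<m. smult (Cf v m j) (\<Prod>l\<in>{..<m}-{j}. [:1, - v l:])) - monom 1 (m - 1)"
  assume "(\<Sum>j<m. smult (Cf v m j) (\<Prod>l\<in>{..<m}-{j}. [:1, - v l:])) - monom 1 (m - 1) \<noteq> 0"
  then have p0: "p \<noteq> 0" unfolding p_def .
  have dl: "degree ([:1, - v l:] :: complex poly) \<le> 1" for l by simp
  have dprod: "degree (\<Prod>l\<in>{..<m}-{j}. [:1, - v l:]) \<le> m - 1" if "j < m" for j
  proof -
    have "degree (\<Prod>l\<in>{..<m}-{j}. [:1, - v l:]) \<le> (\<Sum>l\<in>{..<m}-{j}. degree [:1, - v l:])"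
      using degree_prod_sum_le[of "{..<m}-{j}" "\<lambda>l. [:1, - v l:]"] by (simp add: o_def)
    also have "\<dots> \<le> (\<Sum>l\<in>{..<m}-{j}. 1)" by (rule sum_mono) (rule dl)
    also have "\<dots> = m - 1" using that by simp
    finally show ?thesis .
  qed
  have deg: "degree p \<le> m - 1" unfolding p_def
    by (intro degree_diff_le degree_sum_le order.trans[OF degree_smult_le] dprod degree_monom_le) auto
  have root: "poly p (1 / v k) = 0" if k: "k < m" for k
  proof -
    have vk: "v k \<noteq> 0" using assms(2) k by (auto simp: goodv_def)
    have T0: "Cf v m j * (\<Prod>l\<in>{..<m}-{j}. 1 + 1 / v k * - v l) = 0" if "j < m" "j \<noteq> k" for j
    proof -
      have "(\<Prod>l\<in>{..<m}-{j}. 1 + 1 / v k * - v l) = 0"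
        using that k vk by (subst prod_zero_iff) (auto intro!: bexI[of _ k])
      then show ?thesis by simp
    qed
    have Tk: "Cf v m k * (\<Prod>l\<in>{..<m}-{k}. 1 + 1 / v k * - v l) = (1 / v k) ^ (m - 1)"
    proof -
      have "Cf v m k * (\<Prod>l\<in>{..<m}-{k}. 1 + 1 / v k * - v l) = (\<Prod>l\<in>{..<m}-{k}. (1 + 1 / v k * - v l) / (v k - v l))"
        unfolding Cf_def by (simp add: prod_dividef)
      also have "\<dots> = (\<Prod>l\<in>{..<m}-{k}. 1 / v k)"
      proof (rule prod.cong)
        fix l assume "l \<in> {..<m}-{k}"
        then have "v k \<noteq> v l" using assms(2) k by (auto simp: goodv_def)
        then show "(1 + 1 / v k * - v l) / (v k - v l) = 1 / v k" using vk by (simp add: field_simps)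
      qed simp
      also have "\<dots> = (1 / v k) ^ (m - 1)" using k by simp
      finally show ?thesis .
    qed
    have "poly p (1 / v k) = (\<Sum>j<m. Cf v m j * (\<Prod>l\<in>{..<m}-{j}. 1 + 1 / v k * - v l)) - (1 / v k) ^ (m - 1)"
      unfolding p_def by (simp add: poly_sum poly_prod poly_monom)
    also have "(\<Sum>j<m. Cf v m j * (\<Prod>l\<in>{..<m}-{j}. 1 + 1 / v k * - v l)) = Cf v m k * (\<Prod>l\<in>{..<m}-{k}. 1 + 1 / v k * - v l)"
    proof -
      have "(\<Sum>j<m. Cf v m j * (\<Prod>l\<in>{..<m}-{j}. 1 + 1 / v k * - v l))
         = Cf v m k * (\<Prod>l\<in>{..<m}-{k}. 1 + 1 / v k * - v l) + (\<Sum>j\<in>{..<m}-{k}. Cf v m j * (\<Prod>l\<in>{..<m}-{j}. 1 + 1 / v k * - v l))"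
        using k by (intro sum.remove) auto
      moreover have "(\<Sum>j\<in>{..<m}-{k}. Cf v m j * (\<Prod>l\<in>{..<m}-{j}. 1 + 1 / v k * - v l)) = 0"
      proof (rule sum.neutral, rule ballI)
        fix j assume "j \<in> {..<m}-{k}"
        then show "Cf v m j * (\<Prod>l\<in>{..<m}-{j}. 1 + 1 / v k * - v l) = 0" using T0[of j] by simp
      qed
      ultimately show ?thesis by simp
    qed
    finally show ?thesis using Tk by simp
  qed
  have fin: "finite {x. poly p x = 0}" using p0 by (rule poly_roots_finite)
  have sub: "(\<lambda>k. 1 / v k) ` {..<m} \<subseteq> {x. poly p x = 0}" using root by auto
  have inj: "inj_on (\<lambda>k. 1 / v k) {..<m}"
    using assms(2) by (auto simp: inj_on_def goodv_def)
  have "m = card ((\<lambda>k. 1 / v k) ` {..<m})" using inj by (simp add: card_image)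
  also have "\<dots> \<le> card {x. poly p x = 0}" using fin sub by (rule card_mono)
  also have "\<dots> \<le> degree p" using p0 by (rule card_poly_roots_bound)
  finally show False using deg assms(1) by simp
qed

lemma pf_fps:
  assumes "1 \<le> m" "goodv v m"
  shows "fps_X ^ (m - 1) = (\<Sum>j<m. fps_const (Cf v m j) * (\<Prod>l\<in>{..<m}-{j}. 1 - fps_const (v l) * fps_X :: complex fps))"
proof -
  have "fps_of_poly ((\<Sum>j<m. smult (Cf v m j) (\<Prod>l\<in>{..<m}-{j}. [:1, - v l:])) - monom 1 (m - 1)) = 0"
    using pf_poly[OF assms] by simp
  moreover have "fps_of_poly ([:1, - c:] :: complex poly) = 1 - fps_const c * fps_X" for c
    by (simp add: fps_of_poly_pCons fps_of_poly_const)
  ultimately show ?thesis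
    by (simp add: fps_of_poly_diff fps_of_poly_sum fps_of_poly_smult fps_of_poly_prod fps_of_poly_monom')
qed

definition Qf :: "nat \<Rightarrow> pt \<Rightarrow> nat \<Rightarrow> complex" where
  "Qf n a j = (\<Prod>i<n. (a (Y j) - a (X i)))"

definition Fgen :: "nat \<Rightarrow> nat \<Rightarrow> nat \<Rightarrow> pt \<Rightarrow> complex" where
  "Fgen n m N a = fps_nth (fps_X ^ (m - 1) * genfps n m a) N"

lemma KF:
  assumes "1 \<le> m" "goodv (\<lambda>j. a (Y j)) m" "n \<le> N"
  shows "Fgen n m N a = (\<Sum>j<m. Cf (\<lambda>j. a (Y j)) m j * Qf n a j * a (Y j) ^ (N - n))"
proof -
  let ?v = "\<lambda>j. a (Y j)"
  let ?PU = "\<Prod>i<n. 1 - fps_const (a (X i)) * fps_X :: complex fps"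
  let ?PV = "\<Prod>l<m. 1 - fps_const (a (Y l)) * fps_X :: complex fps"
  let ?R = "\<lambda>j. \<Prod>l\<in>{..<m}-{j}. 1 - fps_const (a (Y l)) * fps_X :: complex fps"
  have r: "?R j * inverse ?PV = inverse (1 - fps_const (a (Y j)) * fps_X)" if "j < m" for j
  proof -
    have "?PV = (1 - fps_const (a (Y j)) * fps_X) * ?R j"
      using that by (subst prod.remove[of _ j]) auto
    then have "inverse ?PV = inverse (1 - fps_const (a (Y j)) * fps_X) * inverse (?R j)"
      by (simp add: fps_inverse_mult)
    moreover have "?R j * inverse (?R j) = 1" by (rule inverse_mult_eq_1') (simp add: prod_lin_0)
    ultimately have "?R j * inverse ?PV = inverse (1 - fps_const (a (Y j)) * fps_X) * (?R j * inverse (?R j))"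
      by (simp only: mult_ac)
    then show ?thesis using \<open>?R j * inverse (?R j) = 1\<close> by simp
  qed
  have "fps_X ^ (m - 1) * genfps n m a = ?PU * (fps_X ^ (m - 1) * inverse ?PV)"
    unfolding genfps_def by (simp add: algebra_simps)
  also have "fps_X ^ (m - 1) * inverse ?PV = (\<Sum>j<m. fps_const (Cf ?v m j) * (?R j * inverse ?PV))"
    by (subst pf_fps[OF assms(1,2)]) (simp only: sum_distrib_right mult.assoc)
  also have "\<dots> = (\<Sum>j<m. fps_const (Cf ?v m j) * inverse (1 - fps_const (a (Y j)) * fps_X))"
    by (intro sum.cong refl) (simp add: r)
  finally have "fps_X ^ (m - 1) * genfps n m a = (\<Sum>j<m. fps_const (Cf ?v m j) * (?PU * inverse (1 - fps_const (a (Y j)) * fps_X)))"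
    by (simp add: sum_distrib_left algebra_simps)
  then have "Fgen n m N a = (\<Sum>j<m. Cf ?v m j * fps_nth (?PU * inverse (1 - fps_const (a (Y j)) * fps_X)) N)"
    unfolding Fgen_def by (simp add: fps_sum_nth)
  also have "\<dots> = (\<Sum>j<m. Cf ?v m j * Qf n a j * a (Y j) ^ (N - n))"
    by (intro sum.cong refl) (simp add: coeff_lin_quot[OF assms(3)] Qf_def)
  finally show ?thesis .
qed

definition Amat :: "nat \<Rightarrow> (nat \<Rightarrow> nat) \<Rightarrow> pt \<Rightarrow> complex mat" where
  "Amat m \<beta> a = mat m m (\<lambda>(i,j). a (Y j) ^ \<beta> i)"
definition Wmat :: "nat \<Rightarrow> nat \<Rightarrow> pt \<Rightarrow> complex mat" where
  "Wmat n m a = mat m m (\<lambda>(i,j). if i = j then Cf (\<lambda>j. a (Y j)) m j * Qf n a j else 0)"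
definition Bmat :: "nat \<Rightarrow> pt \<Rightarrow> complex mat" where
  "Bmat m a = mat m m (\<lambda>(j,b). a (Y j) ^ b)"
definition Mmat :: "nat \<Rightarrow> nat \<Rightarrow> (nat \<Rightarrow> nat) \<Rightarrow> pt \<Rightarrow> complex mat" where
  "Mmat n m \<beta> a = mat m m (\<lambda>(i,b). Fgen n m (n + \<beta> i + b) a)"
definition Jmat :: "nat \<Rightarrow> complex mat" where
  "Jmat m = mat m m (\<lambda>(i,j). if i + j = m - 1 then 1 else 0)"

lemma det_Amat: "det (Amat m \<beta> a) = alt m \<beta> a"
proof -
  have "det (Amat m \<beta> a) = (\<Sum>p\<in>{p. p permutes {0..<m}}. signof p * (\<Prod>i=0..<m. Amat m \<beta> a $$ (i, p i)))"
    unfolding Amat_def by (rule det_def') simp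
  also have "\<dots> = (\<Sum>p\<in>{p. p permutes {..<m}}. of_int (sign p) * (\<Prod>i<m. a (Y (p i)) ^ \<beta> i))"
  proof (rule sum.cong)
    show "{p. p permutes {0..<m}} = {p. p permutes {..<m}}" by (simp add: atLeast0LessThan)
  next
    fix p assume "p \<in> {p. p permutes {..<m}}"
    then have "p i < m" if "i < m" for i using permutes_in_image[of p "{..<m}" i] that by auto
    then show "signof p * (\<Prod>i=0..<m. Amat m \<beta> a $$ (i, p i)) = of_int (sign p) * (\<Prod>i<m. a (Y (p i)) ^ \<beta> i)"
      unfolding Amat_def atLeast0LessThan by (intro arg_cong2[where f="(*)"] refl prod.cong) auto
  qed
  finally show ?thesis unfolding alt_def .
qed

lemma det_Wmat: "det (Wmat n m a) = (\<Prod>j<m. Cf (\<lambda>j. a (Y j)) m j * Qf n a j)"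
proof -
  have "det (Wmat n m a) = prod_list (diag_mat (Wmat n m a))"
    by (rule det_upper_triangular[of _ m]) (auto simp: upper_triangular_def Wmat_def)
  also have "\<dots> = (\<Prod>j<m. Cf (\<lambda>j. a (Y j)) m j * Qf n a j)"
    unfolding prod_list_diag_prod by (simp add: Wmat_def atLeast0LessThan)
  finally show ?thesis .
qed

lemma det_Bmat: "det (Bmat m a) = alt m (\<lambda>i. i) a"
proof -
  have "Bmat m a = transpose_mat (Amat m (\<lambda>i. i) a)"
    by (rule eq_matI) (auto simp: Bmat_def Amat_def)
  then show ?thesis using det_transpose[of "Amat m (\<lambda>i. i) a" m] det_Amat by (simp add: Amat_def)
qed

lemma Mmat_factor:
  assumes "1 \<le> m" "goodv (\<lambda>j. a (Y j)) m"
  shows "Mmat n m \<beta> a = Amat m \<beta> a * Wmat n m a * Bmat m a"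
proof (rule eq_matI)
  fix i b assume ib: "i < dim_row (Amat m \<beta> a * Wmat n m a * Bmat m a)" "b < dim_col (Amat m \<beta> a * Wmat n m a * Bmat m a)"
  then have i: "i < m" and b: "b < m" by (auto simp: Amat_def Bmat_def)
  have AW: "(Amat m \<beta> a * Wmat n m a) $$ (i, k) = a (Y k) ^ \<beta> i * (Cf (\<lambda>j. a (Y j)) m k * Qf n a k)" if k: "k < m" for k
  proof -
    have "(Amat m \<beta> a * Wmat n m a) $$ (i, k) = (\<Sum>j\<in>{0..<m}. a (Y j) ^ \<beta> i * (if j = k then Cf (\<lambda>j. a (Y j)) m j * Qf n a j else 0))"
      using i k by (auto simp: Amat_def Wmat_def scalar_prod_def intro!: sum.cong)
    also have "\<dots> = a (Y k) ^ \<beta> i * (Cf (\<lambda>j. a (Y j)) m k * Qf n a k)"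
      using k by (simp add: if_distrib[of "\<lambda>x. _ * x"] sum.delta cong: if_cong)
    finally show ?thesis .
  qed
  have "(Amat m \<beta> a * Wmat n m a * Bmat m a) $$ (i, b) = (\<Sum>k\<in>{0..<m}. (Amat m \<beta> a * Wmat n m a) $$ (i, k) * a (Y k) ^ b)"
    using i b by (simp add: Amat_def Bmat_def Wmat_def scalar_prod_def)
  also have "\<dots> = (\<Sum>k<m. Cf (\<lambda>j. a (Y j)) m k * Qf n a k * a (Y k) ^ (n + \<beta> i + b - n))"
    by (simp add: atLeast0LessThan AW power_add algebra_simps)
  also have "\<dots> = Fgen n m (n + \<beta> i + b) a"
    by (rule KF[OF assms, symmetric]) simp
  also have "\<dots> = Mmat n m \<beta> a $$ (i, b)" using i b by (simp add: Mmat_def)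
  finally show "Mmat n m \<beta> a $$ (i, b) = (Amat m \<beta> a * Wmat n m a * Bmat m a) $$ (i, b)" by simp
qed (auto simp: Mmat_def Amat_def Bmat_def)

lemma det_Mmat:
  assumes "1 \<le> m" "goodv (\<lambda>j. a (Y j)) m"
  shows "det (Mmat n m \<beta> a) = alt m \<beta> a * (\<Prod>j<m. Cf (\<lambda>j. a (Y j)) m j * Qf n a j) * alt m (\<lambda>i. i) a"
proof -
  have c: "Amat m \<beta> a \<in> carrier_mat m m" "Wmat n m a \<in> carrier_mat m m" "Bmat m a \<in> carrier_mat m m"
    by (auto simp: Amat_def Wmat_def Bmat_def)
  have "det (Mmat n m \<beta> a) = det (Amat m \<beta> a * Wmat n m a) * det (Bmat m a)"
    unfolding Mmat_factor[OF assms] by (rule det_mult[of _ m]) (use c in auto)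
  also have "det (Amat m \<beta> a * Wmat n m a) = det (Amat m \<beta> a) * det (Wmat n m a)"
    by (rule det_mult[OF c(1,2)])
  finally show ?thesis by (simp add: det_Amat det_Wmat det_Bmat)
qed

lemma Jmat_sq: "Jmat m * Jmat m = 1\<^sub>m m"
proof (rule eq_matI)
  fix i j assume "i < dim_row (1\<^sub>m m)" "j < dim_col (1\<^sub>m m)"
  then have i: "i < m" and j: "j < m" by auto
  have "(Jmat m * Jmat m) $$ (i, j) = (\<Sum>k\<in>{0..<m}. (if i + k = m - 1 then 1 else 0) * (if k + j = m - 1 then 1 else 0))"
    using i j by (simp add: Jmat_def scalar_prod_def)
  also have "\<dots> = (\<Sum>k\<in>{0..<m}. if k = m - 1 - i then (if k + j = m - 1 then 1 else 0) else 0)"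
    using i by (intro sum.cong refl) auto
  also have "\<dots> = (if i = j then 1 else 0)"
    using i j by (subst sum.delta) auto
  finally show "(Jmat m * Jmat m) $$ (i, j) = 1\<^sub>m m $$ (i, j)" using i j by simp
qed (auto simp: Jmat_def)

lemma detJ_sq: "det (Jmat m) * det (Jmat m) = 1"
proof -
  have "det (Jmat m * Jmat m) = det (Jmat m) * det (Jmat m)"
    by (rule det_mult[of _ m]) (auto simp: Jmat_def)
  then show ?thesis using Jmat_sq[of m] by simp
qed

lemma Fgen0_low: "N < m - 1 \<Longrightarrow> Fgen n m N a = 0"
  unfolding Fgen_def by (simp add: fps_X_power_mult_nth)

lemma genfps0_0: "fps_nth (genfps 0 m a) 0 = 1"
  unfolding genfps_def by (simp add: prod_lin_0)

lemma det_M0: "det (Mmat 0 m (\<lambda>i. i) a) = det (Jmat m)"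
proof -
  let ?M = "Mmat 0 m (\<lambda>i. i) a"
  have MJ: "(?M * Jmat m) $$ (i, c) = Fgen 0 m (i + (m - 1 - c)) a" if "i < m" "c < m" for i c
  proof -
    have "(?M * Jmat m) $$ (i, c) = (\<Sum>k\<in>{0..<m}. Fgen 0 m (i + k) a * (if k + c = m - 1 then 1 else 0))"
      using that by (simp add: Mmat_def Jmat_def scalar_prod_def)
    also have "\<dots> = (\<Sum>k\<in>{0..<m}. if k = m - 1 - c then Fgen 0 m (i + k) a else 0)"
      using that by (intro sum.cong refl) auto
    also have "\<dots> = Fgen 0 m (i + (m - 1 - c)) a" using that by (subst sum.delta) auto
    finally show ?thesis .
  qed
  have "det (?M * Jmat m) = prod_list (diag_mat (?M * Jmat m))"
  proof (rule det_lower_triangular[of m])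
    fix i j assume "i < j" "j < m"
    then show "(?M * Jmat m) $$ (i, j) = 0" by (simp add: MJ Fgen0_low)
  qed (auto simp: Mmat_def Jmat_def)
  also have "\<dots> = 1"
  proof -
    have "(?M * Jmat m) $$ (i, i) = 1" if "i < m" for i
      using that by (simp add: MJ Fgen_def fps_X_power_mult_nth genfps0_0)
    then show ?thesis unfolding prod_list_diag_prod by (simp add: Mmat_def)
  qed
  finally have "det (?M * Jmat m) = 1" .
  moreover have "det (?M * Jmat m) = det ?M * det (Jmat m)"
    by (rule det_mult[of _ m]) (auto simp: Mmat_def Jmat_def)
  ultimately have "det ?M * det (Jmat m) = 1" by simp
  then have "det ?M * (det (Jmat m) * det (Jmat m)) = det (Jmat m)" by (simp add: mult.assoc[symmetric])
  then show ?thesis using detJ_sq[of m] by simp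
qed

definition Delta :: "nat \<Rightarrow> nat \<Rightarrow> pt \<Rightarrow> complex" where
  "Delta n m a = (\<Prod>j<m. Qf n a j)"

definition Dfun :: "nat \<Rightarrow> nat \<Rightarrow> (nat \<Rightarrow> nat) \<Rightarrow> pt \<Rightarrow> complex" where
  "Dfun n m \<beta> a = det (Mmat n m \<beta> a)"

lemma Fgen_Alg: "Fgen n m N \<in> Alg n m"
proof (cases "N < m - 1")
  case True
  then have "Fgen n m N = (\<lambda>a. 0)" unfolding Fgen_def by (simp add: fps_X_power_mult_nth)
  then show ?thesis by (simp add: Alg.const)
next
  case False
  then have "Fgen n m N = Egen n m (N - (m - 1))" unfolding Fgen_def Egen_def
    by (simp add: fps_X_power_mult_nth)
  then show ?thesis by (simp add: Alg.gen)
qed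

lemma Dfun_Alg: "Dfun n m \<beta> \<in> Alg n m"
proof -
  have "Dfun n m \<beta> = (\<lambda>a. \<Sum>p\<in>{p. p permutes {0..<m}}. signof p * (\<Prod>i\<in>{0..<m}. Fgen n m (n + \<beta> i + p i) a))"
  proof (rule ext)
    fix a
    have "Dfun n m \<beta> a = (\<Sum>p\<in>{p. p permutes {0..<m}}. signof p * (\<Prod>i=0..<m. Mmat n m \<beta> a $$ (i, p i)))"
      unfolding Dfun_def Mmat_def by (rule det_def') simp
    also have "\<dots> = (\<Sum>p\<in>{p. p permutes {0..<m}}. signof p * (\<Prod>i\<in>{0..<m}. Fgen n m (n + \<beta> i + p i) a))"
    proof (rule sum.cong[OF refl])
      fix p assume "p \<in> {p. p permutes {0..<m}}"
      then have "p i < m" if "i < m" for i using permutes_in_image[of p "{0..<m}" i] that by auto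
      then show "signof p * (\<Prod>i=0..<m. Mmat n m \<beta> a $$ (i, p i)) = signof p * (\<Prod>i\<in>{0..<m}. Fgen n m (n + \<beta> i + p i) a)"
        unfolding Mmat_def by (intro arg_cong2[where f="(*)"] refl prod.cong) auto
    qed
    finally show "Dfun n m \<beta> a = (\<Sum>p\<in>{p. p permutes {0..<m}}. signof p * (\<Prod>i\<in>{0..<m}. Fgen n m (n + \<beta> i + p i) a))" .
  qed
  also have "\<dots> \<in> Alg n m"
    by (intro ringset_sum[OF ringset_Alg] ringset_mult[OF ringset_Alg] ringset_const[OF ringset_Alg]
        ringset_prod[OF ringset_Alg] Fgen_Alg)
  finally show ?thesis .
qed

lemma Delta_mpoly: "Delta n m \<in> mpoly_fun (vars n m)"
  unfolding Delta_def[abs_def] Qf_def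
  by (intro mp_prod mp_diff mp_var) (auto simp: vars_def)

lemma Delta_0 [simp]: "Delta n 0 a = 1" and Delta_0' [simp]: "Delta 0 m a = 1"
  by (auto simp: Delta_def Qf_def)

definition bY :: "var \<Rightarrow> complex" where
  "bY v = (case v of Y j \<Rightarrow> of_nat j + 1 | X i \<Rightarrow> 0)"

lemma goodv_line:
  "\<exists>S. finite S \<and> (\<forall>e. e \<notin> S \<longrightarrow> goodv (\<lambda>j. a (Y j) + e * bY (Y j)) m)"
proof -
  let ?S = "(\<lambda>j. - a (Y j) / (of_nat j + 1)) ` {..<m} \<union> (\<lambda>(j,l). (a (Y l) - a (Y j)) / (of_nat j - of_nat l)) ` ({..<m} \<times> {..<m})"
  have "goodv (\<lambda>j. a (Y j) + e * bY (Y j)) m" if e: "e \<notin> ?S" for e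
    unfolding goodv_def
  proof safe
    fix j assume j: "j < m" and z: "a (Y j) + e * bY (Y j) = 0"
    have nz: "(of_nat j + 1 :: complex) \<noteq> 0"
      by (metis of_nat_Suc of_nat_eq_0_iff add.commute nat.distinct(1))
    from z have "e * (of_nat j + 1) = - a (Y j)" unfolding bY_def by (simp add: eq_neg_iff_add_eq_0 add.commute)
    then have "e = - a (Y j) / (of_nat j + 1)" using nz by (simp add: field_simps)
    with e j show False by auto
  next
    fix j l assume j: "j < m" and l: "l < m" "j \<noteq> l" and z: "a (Y j) + e * bY (Y j) = a (Y l) + e * bY (Y l)"
    have nz: "(of_nat j - of_nat l :: complex) \<noteq> 0" using l by simp
    from z have "e * (of_nat j - of_nat l) = a (Y l) - a (Y j)" unfolding bY_def by (simp add: algebra_simps)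
    then have "e = (a (Y l) - a (Y j)) / (of_nat j - of_nat l)" using nz by (simp add: field_simps)
    with e j l show False by auto
  qed
  then show ?thesis by (intro exI[of _ ?S]) auto
qed

lemma alt_id_sq:
  assumes "1 \<le> m" "goodv (\<lambda>j. a (Y j)) m"
  shows "alt m (\<lambda>i. i) a * (\<Prod>j<m. Cf (\<lambda>j. a (Y j)) m j) * alt m (\<lambda>i. i) a = det (Jmat m)"
  using det_Mmat[OF assms, of 0 "\<lambda>i. i"] det_M0[of m a] by (simp add: Qf_def)

lemma Sym_Delta_Alg:
  assumes h: "h \<in> mpoly_fun (Y ` {..<m})" and hs: "symY m h"
  shows "(\<lambda>a. Delta n m a * h a) \<in> Alg n m"
proof (cases "m = 0")
  case True
  then have "h \<in> mpoly_fun {}" using h by simp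
  then have "h = (\<lambda>a. h undefined)" by (rule mp_empty)
  then obtain c where hc: "h = (\<lambda>a. c)" by blast
  show ?thesis using True hc by (simp add: Alg.const)
next
  case False
  then have m1: "1 \<le> m" by simp
  let ?P = "\<lambda>a. h a * alt m (\<lambda>i. i) a"
  have Pm: "?P \<in> mpoly_fun (Y ` {..<m})" by (intro mp_mult h alt_mpoly)
  have Pa: "?P (permY \<sigma> a) = of_int (sign \<sigma>) * ?P a" if "\<sigma> permutes {..<m}" for \<sigma> a
    using hs that by (simp add: symY_def alt_perm)
  obtain L where L: "\<forall>a. ?P a = (\<Sum>x\<leftarrow>L. fst x * alt m (snd x) a) / fact m"
    using antisym_alt[OF Pm Pa] by blast
  define dJ where "dJ = det (Jmat m)"
  define R where "R = (\<lambda>a. (dJ / fact m) * (\<Sum>x\<leftarrow>L. fst x * Dfun n m (snd x) a))"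
  have RA: "R \<in> Alg n m" unfolding R_def
    by (intro ringset_cmult[OF ringset_Alg] ringset_sum_list[OF ringset_Alg] ringset_mult[OF ringset_Alg]
        ringset_const[OF ringset_Alg] Dfun_Alg)
  have eq: "R a = Delta n m a * h a" if g: "goodv (\<lambda>j. a (Y j)) m" for a
  proof -
    let ?C = "\<Prod>j<m. Cf (\<lambda>j. a (Y j)) m j"
    let ?A = "alt m (\<lambda>i. i) a"
    have D: "Dfun n m \<beta> a = alt m \<beta> a * (?C * Delta n m a * ?A)" for \<beta>
      unfolding Dfun_def det_Mmat[OF m1 g] Delta_def by (simp add: prod.distrib mult_ac)
    have "(\<Sum>x\<leftarrow>L. fst x * Dfun n m (snd x) a) = (\<Sum>x\<leftarrow>L. fst x * alt m (snd x) a) * (?C * Delta n m a * ?A)"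
      unfolding D by (induction L) (auto simp: algebra_simps)
    also have "(\<Sum>x\<leftarrow>L. fst x * alt m (snd x) a) = fact m * ?P a"
      using L by simp
    finally have "R a = dJ / fact m * (fact m * (h a * ?A) * (?C * Delta n m a * ?A))"
      unfolding R_def by simp
    also have "\<dots> = dJ * (?A * ?C * ?A) * Delta n m a * h a"
      by (simp add: field_simps)
    also have "?A * ?C * ?A = dJ" unfolding dJ_def by (rule alt_id_sq[OF m1 g])
    also have "dJ * dJ = 1" unfolding dJ_def by (rule detJ_sq)
    finally show ?thesis by simp
  qed
  have "R = (\<lambda>a. Delta n m a * h a)"
  proof (rule ext)
    fix a
    obtain S where S: "finite S" "\<And>e. e \<notin> S \<Longrightarrow> goodv (\<lambda>j. a (Y j) + e * bY (Y j)) m"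
      using goodv_line[of a m] by blast
    show "R a = Delta n m a * h a"
    proof (rule mp_line_eq[OF _ _ S(1), of R "vars n m"])
      show "R \<in> mpoly_fun (vars n m)" using RA by (rule Alg_mpoly)
      show "(\<lambda>a. Delta n m a * h a) \<in> mpoly_fun (vars n m)"
        by (intro mp_mult Delta_mpoly mp_mono[OF h]) (auto simp: vars_def)
      fix e assume "e \<notin> S"
      then show "R (\<lambda>v. a v + e * bY v) = Delta n m (\<lambda>v. a v + e * bY v) * h (\<lambda>v. a v + e * bY v)"
        using eq S(2) by simp
    qed
  qed
  then show ?thesis using RA by simp
qed

definition SymV :: "nat \<Rightarrow> pf set" where
  "SymV m = {h. h \<in> mpoly_fun (Y ` {..<m}) \<and> symY m h}"

lemma ringset_SymV: "ringset (SymV m)"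
  unfolding ringset_def SymV_def symY_def by (auto intro: mp_const mp_add mp_mult)

inductive_set AlgV :: "nat \<Rightarrow> nat \<Rightarrow> pf set" for n m where
  alg: "f \<in> Alg n m \<Longrightarrow> f \<in> AlgV n m"
| symv: "h \<in> SymV m \<Longrightarrow> h \<in> AlgV n m"
| add: "f \<in> AlgV n m \<Longrightarrow> g \<in> AlgV n m \<Longrightarrow> (\<lambda>a. f a + g a) \<in> AlgV n m"
| mult: "f \<in> AlgV n m \<Longrightarrow> g \<in> AlgV n m \<Longrightarrow> (\<lambda>a. f a * g a) \<in> AlgV n m"

lemma ringset_AlgV: "ringset (AlgV n m)"
  unfolding ringset_def by (auto intro: AlgV.intros Alg.const)

lemma AlgV_Delta_aux:
  assumes "k \<in> AlgV n m"
  shows "\<forall>f. (\<forall>S\<in>SymV m. (\<lambda>a. Delta n m a * f a * S a) \<in> Alg n m) \<longrightarrow>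
             (\<forall>S\<in>SymV m. (\<lambda>a. Delta n m a * (k a * f a) * S a) \<in> Alg n m)"
  using assms
proof (induction rule: AlgV.induct)
  case (alg A)
  show ?case
  proof (intro allI impI ballI)
    fix f S assume H: "\<forall>S\<in>SymV m. (\<lambda>a. Delta n m a * f a * S a) \<in> Alg n m" and S: "S \<in> SymV m"
    have "(\<lambda>a. A a * (Delta n m a * f a * S a)) \<in> Alg n m"
      by (rule ringset_mult[OF ringset_Alg alg]) (use H S in blast)
    moreover have "(\<lambda>a. A a * (Delta n m a * f a * S a)) = (\<lambda>a. Delta n m a * (A a * f a) * S a)"
      by (simp add: mult_ac)
    ultimately show "(\<lambda>a. Delta n m a * (A a * f a) * S a) \<in> Alg n m" by simp
  qed
next
  case (symv T)
  show ?case
  proof (intro allI impI ballI)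
    fix f S assume H: "\<forall>S\<in>SymV m. (\<lambda>a. Delta n m a * f a * S a) \<in> Alg n m" and S: "S \<in> SymV m"
    have "(\<lambda>a. T a * S a) \<in> SymV m" using symv S by (intro ringset_mult[OF ringset_SymV])
    then have "(\<lambda>a. Delta n m a * f a * (T a * S a)) \<in> Alg n m" using bspec[OF H] by simp
    moreover have "(\<lambda>a. Delta n m a * f a * (T a * S a)) = (\<lambda>a. Delta n m a * (T a * f a) * S a)"
      by (simp add: mult_ac)
    ultimately show "(\<lambda>a. Delta n m a * (T a * f a) * S a) \<in> Alg n m" by simp
  qed
next
  case (add k1 k2)
  show ?case
  proof (intro allI impI ballI)
    fix f S assume H: "\<forall>S\<in>SymV m. (\<lambda>a. Delta n m a * f a * S a) \<in> Alg n m" and S: "S \<in> SymV m"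
    have "(\<lambda>a. Delta n m a * (k1 a * f a) * S a + Delta n m a * (k2 a * f a) * S a) \<in> Alg n m"
      using add H S by (intro ringset_add[OF ringset_Alg]) auto
    moreover have "(\<lambda>a. Delta n m a * (k1 a * f a) * S a + Delta n m a * (k2 a * f a) * S a) = (\<lambda>a. Delta n m a * ((k1 a + k2 a) * f a) * S a)"
      by (simp add: algebra_simps)
    ultimately show "(\<lambda>a. Delta n m a * ((k1 a + k2 a) * f a) * S a) \<in> Alg n m" by simp
  qed
next
  case (mult k1 k2)
  show ?case
  proof (intro allI impI ballI)
    fix f S assume H: "\<forall>S\<in>SymV m. (\<lambda>a. Delta n m a * f a * S a) \<in> Alg n m" and S: "S \<in> SymV m"
    have i2: "(\<forall>S\<in>SymV m. (\<lambda>a. Delta n m a * f a * S a) \<in> Alg n m) \<longrightarrow>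
        (\<forall>S\<in>SymV m. (\<lambda>a. Delta n m a * (k2 a * f a) * S a) \<in> Alg n m)"
      using spec[OF mult.IH(2), of f] .
    have i1: "(\<forall>S\<in>SymV m. (\<lambda>a. Delta n m a * (k2 a * f a) * S a) \<in> Alg n m) \<longrightarrow>
        (\<forall>S\<in>SymV m. (\<lambda>a. Delta n m a * (k1 a * (k2 a * f a)) * S a) \<in> Alg n m)"
      using spec[OF mult.IH(1), of "\<lambda>a. k2 a * f a"] .
    from i2 H have "\<forall>S\<in>SymV m. (\<lambda>a. Delta n m a * (k2 a * f a) * S a) \<in> Alg n m" by (rule mp)
    with i1 have "\<forall>S\<in>SymV m. (\<lambda>a. Delta n m a * (k1 a * (k2 a * f a)) * S a) \<in> Alg n m" by (rule mp)
    from bspec[OF this S] have "(\<lambda>a. Delta n m a * (k1 a * (k2 a * f a)) * S a) \<in> Alg n m" .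
    moreover have "(\<lambda>a. Delta n m a * (k1 a * (k2 a * f a)) * S a) = (\<lambda>a. Delta n m a * (k1 a * k2 a * f a) * S a)"
      by (simp add: mult_ac)
    ultimately show "(\<lambda>a. Delta n m a * (k1 a * k2 a * f a) * S a) \<in> Alg n m" by simp
  qed
qed

lemma AlgV_Delta:
  assumes "k \<in> AlgV n m"
  shows "(\<lambda>a. Delta n m a * k a) \<in> Alg n m"
proof -
  have one: "(\<lambda>a. 1) \<in> SymV m" by (rule ringset_const[OF ringset_SymV])
  have base: "\<forall>S\<in>SymV m. (\<lambda>a. Delta n m a * 1 * S a) \<in> Alg n m"
    using Sym_Delta_Alg by (simp add: SymV_def)
  have imp: "(\<forall>S\<in>SymV m. (\<lambda>a. Delta n m a * 1 * S a) \<in> Alg n m) \<longrightarrow>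
      (\<forall>S\<in>SymV m. (\<lambda>a. Delta n m a * (k a * 1) * S a) \<in> Alg n m)"
    by (rule spec[OF AlgV_Delta_aux[OF assms]])
  from imp base have "\<forall>S\<in>SymV m. (\<lambda>a. Delta n m a * (k a * 1) * S a) \<in> Alg n m" by (rule mp)
  from bspec[OF this one] have "(\<lambda>a. Delta n m a * (k a * 1) * 1) \<in> Alg n m" by simp
  then show ?thesis by simp
qed

fun sw :: "var \<Rightarrow> var" where
  "sw (X i) = Y i" | "sw (Y j) = X j"

lemma sw_sw [simp]: "sw (sw v) = v" by (cases v) auto

lemma Hu_AlgV: "(\<lambda>a. fps_nth (inverse (\<Prod>i<n. 1 - fps_const (a (X i)) * fps_X)) r) \<in> AlgV n m"
proof -
  let ?PU = "\<lambda>a. \<Prod>i<n. 1 - fps_const (a (X i)) * fps_X :: complex fps"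
  let ?PV = "\<lambda>a. \<Prod>j<m. 1 - fps_const (a (Y j)) * fps_X :: complex fps"
  have g0: "fps_nth (genfps n m a) 0 = 1" for a unfolding genfps_def by (simp add: prod_lin_0)
  have e: "inverse (?PU a) = inverse (genfps n m a) * inverse (?PV a)" for a
  proof -
    have "inverse (genfps n m a) = inverse (?PU a) * ?PV a"
      unfolding genfps_def fps_inverse_mult by (simp add: prod_lin_0)
    then have "inverse (genfps n m a) * inverse (?PV a) = inverse (?PU a) * (?PV a * inverse (?PV a))"
      by (simp add: mult_ac)
    also have "?PV a * inverse (?PV a) = 1" by (rule inverse_mult_eq_1') (simp add: prod_lin_0)
    finally show ?thesis by simp
  qed
  have A: "(\<lambda>a. fps_nth (inverse (genfps n m a)) i) \<in> AlgV n m" for i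
  proof -
    have "(\<lambda>a. fps_nth (inverse (genfps n m a)) i) \<in> Alg n m"
      by (rule coeff_inverse[OF ringset_Alg]) (auto simp: g0 Egen_def[symmetric] Alg.gen)
    then show ?thesis by (rule AlgV.alg)
  qed
  have B: "(\<lambda>a. fps_nth (inverse (?PV a)) k) \<in> AlgV n m" for k
  proof (rule AlgV.symv)
    have "(\<lambda>a. fps_nth (inverse (?PV a)) k) \<in> mpoly_fun (Y ` {..<m})"
      by (intro coeff_inverse[OF ringset_mpoly] coeff_prod[OF ringset_mpoly] coeff_lin[OF ringset_mpoly] mp_var)
         (auto simp: prod_lin_0)
    moreover have "symY m (\<lambda>a. fps_nth (inverse (?PV a)) k)"
      unfolding symY_def
    proof (intro allI impI)
      fix \<sigma> a assume s: "\<sigma> permutes {..<m}"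
      have "?PV (permY \<sigma> a) = ?PV a"
        using prod.permute[OF s, of "\<lambda>j. 1 - fps_const (a (Y j)) * fps_X"] by (simp add: o_def)
      then show "fps_nth (inverse (?PV (permY \<sigma> a))) k = fps_nth (inverse (?PV a)) k" by simp
    qed
    ultimately show "(\<lambda>a. fps_nth (inverse (?PV a)) k) \<in> SymV m" by (simp add: SymV_def)
  qed
  have "(\<lambda>a. fps_nth (inverse (?PU a)) r) = (\<lambda>a. \<Sum>i=0..r. fps_nth (inverse (genfps n m a)) i * fps_nth (inverse (?PV a)) (r - i))"
    unfolding e by (simp add: fps_mult_nth)
  also have "\<dots> \<in> AlgV n m"
    by (intro ringset_sum[OF ringset_AlgV] ringset_mult[OF ringset_AlgV] A B)
  finally show ?thesis .
qed

lemma Alg0_swap: "g \<in> Alg 0 n \<Longrightarrow> (\<lambda>a. g (a \<circ> sw)) \<in> AlgV n m"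
proof (induction rule: Alg.induct)
  case (const c) then show ?case by (simp add: ringset_const[OF ringset_AlgV])
next
  case (gen r)
  have eq: "(\<lambda>a. Egen 0 n r (a \<circ> sw)) = (\<lambda>a. fps_nth (inverse (\<Prod>i<n. 1 - fps_const (a (X i)) * fps_X)) r)"
    by (simp add: Egen_def genfps_def)
  show ?case unfolding eq by (rule Hu_AlgV)
next
  case (add f g) then show ?case by (simp add: ringset_add[OF ringset_AlgV])
next
  case (mult f g) then show ?case by (simp add: ringset_mult[OF ringset_AlgV])
qed

lemma SymU_AlgV:
  assumes h: "h \<in> mpoly_fun (X ` {..<n})" and hs: "symX n h"
  shows "h \<in> AlgV n m"
proof -
  let ?h' = "\<lambda>a. h (a \<circ> sw)"
  have m1: "?h' \<in> mpoly_fun (Y ` {..<n})"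
    by (rule mp_subst[OF h]) (auto intro: mp_var)
  have s1: "symY n ?h'" unfolding symY_def
  proof (intro allI impI)
    fix \<sigma> a assume s: "\<sigma> permutes {..<n}"
    have "permY \<sigma> a \<circ> sw = permX \<sigma> (a \<circ> sw)"
    proof
      fix v show "(permY \<sigma> a \<circ> sw) v = permX \<sigma> (a \<circ> sw) v" by (cases v) auto
    qed
    then show "?h' (permY \<sigma> a) = ?h' a" using hs s by (simp add: symX_def)
  qed
  have "(\<lambda>a. Delta 0 n a * ?h' a) \<in> Alg 0 n" by (rule Sym_Delta_Alg[OF m1 s1])
  then have "?h' \<in> Alg 0 n" by simp
  then have "(\<lambda>a. ?h' (a \<circ> sw)) \<in> AlgV n m" by (rule Alg0_swap)
  moreover have "(\<lambda>a. ?h' (a \<circ> sw)) = h" by (simp add: o_def)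
  ultimately show ?thesis by simp
qed

lemma permX_comp: "permX \<tau> (permX \<rho> a) = permX (\<rho> \<circ> \<tau>) a"
  by (rule ext, case_tac x) (auto simp: permX_def)
lemma permY_comp: "permY \<tau> (permY \<rho> a) = permY (\<rho> \<circ> \<tau>) a"
  by (rule ext, case_tac x) (auto simp: permY_def)

definition avgX :: "nat \<Rightarrow> pf \<Rightarrow> pf" where
  "avgX n f = (\<lambda>a. inverse (fact n) * (\<Sum>\<tau>\<in>{\<tau>. \<tau> permutes {..<n}}. f (permX \<tau> a)))"
definition avgY :: "nat \<Rightarrow> pf \<Rightarrow> pf" where
  "avgY m f = (\<lambda>a. inverse (fact m) * (\<Sum>\<tau>\<in>{\<tau>. \<tau> permutes {..<m}}. f (permY \<tau> a)))"

lemma avgX_id: "symX n f \<Longrightarrow> avgX n f = f"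
  unfolding avgX_def symX_def by (auto simp: card_permutations)
lemma avgY_id: "symY m f \<Longrightarrow> avgY m f = f"
  unfolding avgY_def symY_def by (auto simp: card_permutations)

lemma avgX_sym: "symX n (avgX n f)"
  unfolding symX_def
proof (intro allI impI)
  fix \<rho> a assume r: "\<rho> permutes {..<n}"
  have "(\<Sum>\<tau>\<in>{\<tau>. \<tau> permutes {..<n}}. f (permX \<tau> (permX \<rho> a))) = (\<Sum>\<tau>\<in>{\<tau>. \<tau> permutes {..<n}}. f (permX (\<rho> \<circ> \<tau>) a))"
    by (simp add: permX_comp)
  also have "\<dots> = (\<Sum>\<tau>\<in>{\<tau>. \<tau> permutes {..<n}}. f (permX \<tau> a))"
    by (rule setum_permutations_compose_left[OF r, symmetric])
  finally show "avgX n f (permX \<rho> a) = avgX n f a" unfolding avgX_def by simp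
qed
lemma avgY_sym: "symY m (avgY m f)"
  unfolding symY_def
proof (intro allI impI)
  fix \<rho> a assume r: "\<rho> permutes {..<m}"
  have "(\<Sum>\<tau>\<in>{\<tau>. \<tau> permutes {..<m}}. f (permY \<tau> (permY \<rho> a))) = (\<Sum>\<tau>\<in>{\<tau>. \<tau> permutes {..<m}}. f (permY (\<rho> \<circ> \<tau>) a))"
    by (simp add: permY_comp)
  also have "\<dots> = (\<Sum>\<tau>\<in>{\<tau>. \<tau> permutes {..<m}}. f (permY \<tau> a))"
    by (rule setum_permutations_compose_left[OF r, symmetric])
  finally show "avgY m f (permY \<rho> a) = avgY m f a" unfolding avgY_def by simp
qed

lemma permutes_lt: "\<tau> permutes {..<n} \<Longrightarrow> i < n \<Longrightarrow> \<tau> i < n"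
  using permutes_in_image[of \<tau> "{..<n}" i] by auto

lemma avgX_mpoly:
  assumes f: "f \<in> mpoly_fun (X ` {..<n})" shows "avgX n f \<in> mpoly_fun (X ` {..<n})"
proof -
  have s: "(\<lambda>a. f (permX \<tau> a)) \<in> mpoly_fun (X ` {..<n})" if t: "\<tau> \<in> {\<tau>. \<tau> permutes {..<n}}" for \<tau>
  proof (rule mp_subst[OF f])
    fix v assume "v \<in> X ` {..<n}"
    then obtain i where i: "i < n" "v = X i" by auto
    have "X (\<tau> i) \<in> X ` {..<n}" using permutes_lt[of \<tau> n i] t i by auto
    then show "(\<lambda>a. permX \<tau> a v) \<in> mpoly_fun (X ` {..<n})" using i by (simp add: mp_var)
  qed
  show ?thesis unfolding avgX_def by (rule mp_mult[OF mp_const mp_sum]) (rule s)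
qed
lemma avgY_mpoly:
  assumes f: "f \<in> mpoly_fun (Y ` {..<m})" shows "avgY m f \<in> mpoly_fun (Y ` {..<m})"
proof -
  have s: "(\<lambda>a. f (permY \<tau> a)) \<in> mpoly_fun (Y ` {..<m})" if t: "\<tau> \<in> {\<tau>. \<tau> permutes {..<m}}" for \<tau>
  proof (rule mp_subst[OF f])
    fix v assume "v \<in> Y ` {..<m}"
    then obtain i where i: "i < m" "v = Y i" by auto
    have "Y (\<tau> i) \<in> Y ` {..<m}" using permutes_lt[of \<tau> m i] t i by auto
    then show "(\<lambda>a. permY \<tau> a v) \<in> mpoly_fun (Y ` {..<m})" using i by (simp add: mp_var)
  qed
  show ?thesis unfolding avgY_def by (rule mp_mult[OF mp_const mp_sum]) (rule s)
qed

lemma mon_mpoly: "finite W \<Longrightarrow> mon W \<beta> \<in> mpoly_fun W"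
  unfolding mon_def[abs_def] by (intro mp_prod mp_power mp_var) auto

lemma Sym_AlgV:
  assumes k: "k \<in> mpoly_fun (vars n m)" and kx: "symX n k" and ky: "symY m k"
  shows "k \<in> AlgV n m"
proof -
  let ?U = "X ` {..<n}" and ?W = "Y ` {..<m}"
  obtain L where L1: "\<forall>x\<in>set L. fst x \<in> mpoly_fun ?U"
    and L2: "\<forall>a. k a = (\<Sum>x\<leftarrow>L. fst x a * mon ?W (snd x) a)"
    using mp_expand[OF k, of ?U ?W] by (auto simp: vars_def)
  define M where "M x = avgY m (mon ?W (snd x))" for x :: "pf \<times> (var \<Rightarrow> nat)"
  define C where "C x = avgX n (fst x)" for x :: "pf \<times> (var \<Rightarrow> nat)"
  let ?PX = "{\<tau>. \<tau> permutes {..<n}}" and ?PY = "{\<tau>. \<tau> permutes {..<m}}"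
  have Mm: "M x \<in> mpoly_fun ?W" for x unfolding M_def by (intro avgY_mpoly mon_mpoly) simp
  have Mloc: "M x (permX \<tau> a) = M x a" for x \<tau> a
    by (rule mp_local[OF Mm]) auto
  have cloc: "fst x (permY \<sigma> a) = fst x a" if "x \<in> set L" for x \<sigma> a
    by (rule mp_local[of _ ?U]) (use L1 that in auto)
  have step1: "k a = (\<Sum>x\<leftarrow>L. fst x a * M x a)" for a
  proof -
    have "k a = avgY m k a" using avgY_id[OF ky] by simp
    also have "\<dots> = inverse (fact m) * (\<Sum>\<sigma>\<in>?PY. \<Sum>x\<leftarrow>L. fst x a * mon ?W (snd x) (permY \<sigma> a))"
      unfolding avgY_def using L2 cloc by (simp cong: map_cong)
    also have "\<dots> = inverse (fact m) * (\<Sum>x\<leftarrow>L. \<Sum>\<sigma>\<in>?PY. fst x a * mon ?W (snd x) (permY \<sigma> a))"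
      by (simp only: sum_sum_list_swap)
    also have "\<dots> = (\<Sum>x\<leftarrow>L. fst x a * M x a)"
      unfolding M_def avgY_def by (simp add: sum_list_const_mult[symmetric] sum_distrib_left mult_ac)
    finally show ?thesis .
  qed
  have step2: "k a = (\<Sum>x\<leftarrow>L. C x a * M x a)" for a
  proof -
    have "k a = avgX n k a" using avgX_id[OF kx] by simp
    also have "\<dots> = inverse (fact n) * (\<Sum>\<tau>\<in>?PX. \<Sum>x\<leftarrow>L. fst x (permX \<tau> a) * M x a)"
      unfolding avgX_def step1 Mloc ..
    also have "\<dots> = inverse (fact n) * (\<Sum>x\<leftarrow>L. \<Sum>\<tau>\<in>?PX. fst x (permX \<tau> a) * M x a)"
      by (simp only: sum_sum_list_swap)
    also have "\<dots> = (\<Sum>x\<leftarrow>L. C x a * M x a)"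
      unfolding C_def avgX_def sum_distrib_right[symmetric] by (simp add: sum_list_const_mult[symmetric] mult_ac)
    finally show ?thesis .
  qed
  have CA: "C x \<in> AlgV n m" if "x \<in> set L" for x
    unfolding C_def by (rule SymU_AlgV) (use L1 that in \<open>auto intro: avgX_mpoly avgX_sym\<close>)
  have MA: "M x \<in> AlgV n m" for x
    by (rule AlgV.symv) (use Mm in \<open>auto simp: SymV_def M_def avgY_sym\<close>)
  have "(\<lambda>a. \<Sum>x\<leftarrow>L. C x a * M x a) \<in> AlgV n m"
    by (intro ringset_sum_list[OF ringset_AlgV] ringset_mult[OF ringset_AlgV] CA MA)
  moreover have "(\<lambda>a. \<Sum>x\<leftarrow>L. C x a * M x a) = k" using step2 by auto
  ultimately show ?thesis by simp
qed

lemma div_pairs: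
  assumes "finite P" "P \<subseteq> {..<m} \<times> {..<n}"
  shows "h \<in> mpoly_fun (vars n m) \<Longrightarrow> (\<forall>(j,i)\<in>P. \<forall>a. a (Y j) = a (X i) \<longrightarrow> h a = 0) \<Longrightarrow>
    \<exists>k\<in>mpoly_fun (vars n m). \<forall>a. h a = (\<Prod>(j,i)\<in>P. (a (Y j) - a (X i))) * k a"
  using assms
proof (induction P arbitrary: h rule: finite_induct)
  case empty then show ?case by auto
next
  case (insert p P)
  obtain j0 i0 where p: "p = (j0, i0)" by (cases p)
  have j0: "j0 < m" and i0: "i0 < n" using insert.prems(3) p by auto
  have vY: "Y j0 \<in> vars n m" and vX: "(\<lambda>a. a (X i0)) \<in> mpoly_fun (vars n m)"
    using j0 i0 by (auto simp: vars_def intro: mp_var)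
  obtain g where g: "g \<in> mpoly_fun (vars n m)" and hg: "h = (\<lambda>a. (a (Y j0) - a (X i0)) * g a)"
    using mp_div[OF insert.prems(1) vY vX, of] insert.prems(2) p by auto
  have gz0: "g a = 0" if ji: "(j, i) \<in> P" and eq: "a (Y j) = a (X i)" for j i and a :: pt
  proof -
    have ne: "(j, i) \<noteq> (j0, i0)" using ji insert.hyps(2) p by auto
    define b where "b v = (if v = Y j \<or> v = X i then 1 else 0) + (if v = Y j0 \<and> j0 \<noteq> j then 2 else (0::complex))" for v
    define s where "s = b (Y j0) - b (X i0)"
    have s0: "s \<noteq> 0"
    proof (cases "j0 = j")
      case True then have "i0 \<noteq> i" using ne by auto
      then show ?thesis using True by (simp add: s_def b_def)
    next
      case False then show ?thesis by (auto simp: s_def b_def)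
    qed
    let ?e0 = "- (a (Y j0) - a (X i0)) / s"
    show "g a = 0"
    proof (rule mp_line_zero[OF g, of "{?e0}" a b])
      fix e assume e: "e \<notin> {?e0}"
      let ?a = "\<lambda>v. a v + e * b v"
      have "?a (Y j) = ?a (X i)" using eq by (auto simp: b_def)
      then have "h ?a = 0" using insert.prems(2) ji by auto
      moreover have "?a (Y j0) - ?a (X i0) \<noteq> 0"
      proof
        assume "?a (Y j0) - ?a (X i0) = 0"
        then have "(a (Y j0) - a (X i0)) + e * s = 0" unfolding s_def by (simp add: algebra_simps)
        then have "e = ?e0" using s0 by (simp add: field_simps eq_neg_iff_add_eq_0)
        with e show False by simp
      qed
      ultimately show "g ?a = 0" using hg by simp
    qed simp
  qed
  have gz: "\<forall>(j,i)\<in>P. \<forall>a. a (Y j) = a (X i) \<longrightarrow> g a = 0" using gz0 by auto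
  obtain k where k: "k \<in> mpoly_fun (vars n m)" "\<forall>a. g a = (\<Prod>(j,i)\<in>P. (a (Y j) - a (X i))) * k a"
    using insert.IH[OF g gz] insert.prems(3) by auto
  have "h a = (\<Prod>(j,i)\<in>insert p P. (a (Y j) - a (X i))) * k a" for a
    using insert.hyps k(2) hg p by (simp add: mult.assoc)
  then show ?case using k(1) by blast
qed

lemma Delta_pairs: "Delta n m a = (\<Prod>(j,i)\<in>{..<m} \<times> {..<n}. (a (Y j) - a (X i)))"
  unfolding Delta_def Qf_def by (simp add: prod.cartesian_product)

lemma Delta_div:
  assumes "h \<in> mpoly_fun (vars n m)" "\<And>a i j. i < n \<Longrightarrow> j < m \<Longrightarrow> a (Y j) = a (X i) \<Longrightarrow> h a = 0"
  shows "\<exists>k\<in>mpoly_fun (vars n m). h = (\<lambda>a. Delta n m a * k a)"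
proof -
  obtain k where "k \<in> mpoly_fun (vars n m)" "\<forall>a. h a = (\<Prod>(j,i)\<in>{..<m} \<times> {..<n}. (a (Y j) - a (X i))) * k a"
    using div_pairs[of "{..<m} \<times> {..<n}" m n h] assms by auto
  then show ?thesis unfolding Delta_pairs by auto
qed

lemma Delta_permX:
  assumes s: "\<sigma> permutes {..<n}" shows "Delta n m (permX \<sigma> a) = Delta n m a"
proof -
  have "(\<Prod>i<n. a (Y j) - a (X (\<sigma> i))) = (\<Prod>i<n. a (Y j) - a (X i))" for j
    using prod.permute[OF s, of "\<lambda>i. a (Y j) - a (X i)"] by (simp add: o_def)
  then show ?thesis unfolding Delta_def Qf_def by simp
qed
lemma Delta_permY: "\<sigma> permutes {..<m} \<Longrightarrow> Delta n m (permY \<sigma> a) = Delta n m a"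
  unfolding Delta_def Qf_def
  using prod.permute[of \<sigma> "{..<m}" "\<lambda>j. \<Prod>i<n. a (Y j) - a (X i)"] by (simp add: o_def)

definition bXY :: "var \<Rightarrow> complex" where
  "bXY v = (case v of X i \<Rightarrow> of_nat i + 1 | Y j \<Rightarrow> - (of_nat j + 1))"

lemma Delta_line: "\<exists>S. finite S \<and> (\<forall>e. e \<notin> S \<longrightarrow> Delta n m (\<lambda>v. a v + e * bXY v) \<noteq> 0)"
proof -
  let ?S = "(\<lambda>(j,i). (a (Y j) - a (X i)) / (of_nat j + of_nat i + 2)) ` ({..<m} \<times> {..<n})"
  have "Delta n m (\<lambda>v. a v + e * bXY v) \<noteq> 0" if e: "e \<notin> ?S" for e
  proof -
    have "a (Y j) + e * bXY (Y j) - (a (X i) + e * bXY (X i)) \<noteq> 0" if j: "j < m" and i: "i < n" for j i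
    proof
      assume z: "a (Y j) + e * bXY (Y j) - (a (X i) + e * bXY (X i)) = 0"
      have nz: "(of_nat j + of_nat i + 2 :: complex) \<noteq> 0"
      proof -
        have "(of_nat j + of_nat i + 2 :: complex) = of_nat (j + i + 2)" by simp
        also have "\<dots> \<noteq> 0" by (simp only: of_nat_eq_0_iff)
        finally show ?thesis .
      qed
      from z have "e * (of_nat j + of_nat i + 2) = a (Y j) - a (X i)"
        unfolding bXY_def by (simp add: algebra_simps)
      then have "e = (a (Y j) - a (X i)) / (of_nat j + of_nat i + 2)" using nz by (simp add: field_simps)
      with e i j show False by auto
    qed
    then show ?thesis unfolding Delta_def Qf_def by (simp add: prod_zero_iff)
  qed
  then show ?thesis by (intro exI[of _ ?S]) auto
qed

lemma permX_mpoly: "\<sigma> permutes {..<n} \<Longrightarrow> k \<in> mpoly_fun (vars n m) \<Longrightarrow> (\<lambda>a. k (permX \<sigma> a)) \<in> mpoly_fun (vars n m)"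
  by (rule mp_subst[of k]) (auto simp: vars_def permutes_lt intro!: mp_var)
lemma permY_mpoly: "\<sigma> permutes {..<m} \<Longrightarrow> k \<in> mpoly_fun (vars n m) \<Longrightarrow> (\<lambda>a. k (permY \<sigma> a)) \<in> mpoly_fun (vars n m)"
  by (rule mp_subst[of k]) (auto simp: vars_def permutes_lt intro!: mp_var)

lemma quot_sym:
  assumes k: "k \<in> mpoly_fun (vars n m)" and hk: "\<And>a. h a = Delta n m a * k a"
    and hx: "symX n h" and hy: "symY m h"
  shows "symX n k \<and> symY m k"
proof -
  have cancel: "k a' = k a" if "Delta n m a * k a' = Delta n m a * k a" "Delta n m a \<noteq> 0" for a a'
    using that by simp
  have X: "k (permX \<sigma> a) = k a" if s: "\<sigma> permutes {..<n}" for \<sigma> a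
  proof -
    obtain S where S: "finite S" "\<And>e. e \<notin> S \<Longrightarrow> Delta n m (\<lambda>v. a v + e * bXY v) \<noteq> 0"
      using Delta_line[of n m a] by blast
    show ?thesis
    proof (rule mp_line_eq[OF permX_mpoly[OF s k] k S(1)])
      fix e assume "e \<notin> S"
      let ?a = "\<lambda>v. a v + e * bXY v"
      have "Delta n m ?a * k (permX \<sigma> ?a) = h (permX \<sigma> ?a)" using hk Delta_permX[OF s] by simp
      also have "\<dots> = h ?a" using hx s by (simp add: symX_def)
      also have "\<dots> = Delta n m ?a * k ?a" by (rule hk)
      finally show "k (permX \<sigma> ?a) = k ?a" using S(2)[OF \<open>e \<notin> S\<close>] by simp
    qed
  qed
  have Y: "k (permY \<sigma> a) = k a" if s: "\<sigma> permutes {..<m}" for \<sigma> a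
  proof -
    obtain S where S: "finite S" "\<And>e. e \<notin> S \<Longrightarrow> Delta n m (\<lambda>v. a v + e * bXY v) \<noteq> 0"
      using Delta_line[of n m a] by blast
    show ?thesis
    proof (rule mp_line_eq[OF permY_mpoly[OF s k] k S(1)])
      fix e assume "e \<notin> S"
      let ?a = "\<lambda>v. a v + e * bXY v"
      have "Delta n m ?a * k (permY \<sigma> ?a) = h (permY \<sigma> ?a)" using hk Delta_permY[OF s] by simp
      also have "\<dots> = h ?a" using hy s by (simp add: symY_def)
      also have "\<dots> = Delta n m ?a * k ?a" by (rule hk)
      finally show "k (permY \<sigma> ?a) = k ?a" using S(2)[OF \<open>e \<notin> S\<close>] by simp
    qed
  qed
  show ?thesis using X Y by (auto simp: symX_def symY_def)
qed

definition SS :: "nat \<Rightarrow> nat \<Rightarrow> pf set" where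
  "SS n m = {f. f \<in> mpoly_fun (vars n m) \<and> symX n f \<and> symY m f \<and> super n m f}"

lemma sym_Delta_Alg:
  assumes "f \<in> mpoly_fun (vars n m)" "symX n f" "symY m f"
  shows "(\<lambda>a. Delta n m a * f a) \<in> Alg n m"
  using AlgV_Delta[OF Sym_AlgV[OF assms]] .

lemma upd_Xn_permX:
  assumes "\<sigma> permutes {..<n}"
  shows "(permX \<sigma> a)(X n := 0) = permX \<sigma> (a(X n := 0))"
proof
  fix v show "((permX \<sigma> a)(X n := 0)) v = permX \<sigma> (a(X n := 0)) v"
  proof (cases v)
    case (X k)
    have sn: "\<sigma> n = n" using permutes_not_in[OF assms] by simp
    have "\<sigma> k = n \<longleftrightarrow> k = n" using permutes_inj[OF assms] sn by (metis injD)
    then show ?thesis using X by auto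
  qed auto
qed

lemma upd_Xn_permY: "(permY \<sigma> a)(X n := 0) = permY \<sigma> (a(X n := 0))"
  by (rule ext, case_tac x) (auto simp: permY_def)

lemma SS_restrict:
  assumes "f \<in> SS (Suc n) m"
  shows "(\<lambda>a. f (a(X n := 0))) \<in> SS n m"
proof -
  have fm: "f \<in> mpoly_fun (vars (Suc n) m)" and fx: "symX (Suc n) f" and fy: "symY m f" and fs: "super (Suc n) m f"
    using assms by (auto simp: SS_def)
  have "(\<lambda>a. f (a(X n := 0))) \<in> mpoly_fun (vars n m)"
  proof (rule mp_subst[OF fm])
    fix v assume v: "v \<in> vars (Suc n) m"
    show "(\<lambda>a. (a(X n := 0)) v) \<in> mpoly_fun (vars n m)"
    proof (cases "v = X n")
      case True then show ?thesis by (simp add: mp_const)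
    next
      case False then have "v \<in> vars n m" using v by (auto simp: vars_def less_Suc_eq)
      then show ?thesis using False by (simp add: mp_var)
    qed
  qed
  moreover have "symX n (\<lambda>a. f (a(X n := 0)))" unfolding symX_def
  proof (intro allI impI)
    fix \<sigma> a assume s: "\<sigma> permutes {..<n}"
    have s': "\<sigma> permutes {..<Suc n}" using permutes_subset[OF s] by auto
    show "f ((permX \<sigma> a)(X n := 0)) = f (a(X n := 0))"
      unfolding upd_Xn_permX[OF s] using fx s' by (simp add: symX_def)
  qed
  moreover have "symY m (\<lambda>a. f (a(X n := 0)))" unfolding symY_def
    using fy by (simp add: symY_def upd_Xn_permY)
  moreover have "super n m (\<lambda>a. f (a(X n := 0)))" unfolding super_def
  proof (intro impI allI)
    fix a s t assume n: "0 < n" and m: "0 < m"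
    have e: "a(X 0 := c, Y 0 := c, X n := 0) = (a(X n := 0))(X 0 := c, Y 0 := c)" for c :: complex
      using n by (auto simp: fun_upd_twist)
    show "f (a(X 0 := s, Y 0 := s, X n := 0)) = f (a(X 0 := t, Y 0 := t, X n := 0))"
      unfolding e using fs m by (simp add: super_def)
  qed
  ultimately show ?thesis by (simp add: SS_def)
qed

theorem SS_Alg: "f \<in> SS n m \<Longrightarrow> f \<in> Alg n m"
proof (induction n arbitrary: f)
  case 0
  then have "(\<lambda>a. Delta 0 m a * f a) \<in> Alg 0 m" by (intro sym_Delta_Alg) (auto simp: SS_def)
  then show ?case by simp
next
  case (Suc n)
  have fm: "f \<in> mpoly_fun (vars (Suc n) m)" and fx: "symX (Suc n) f" and fy: "symY m f" and fs: "super (Suc n) m f"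
    using Suc.prems by (auto simp: SS_def)
  show ?case
  proof (cases "m = 0")
    case True
    have "(\<lambda>a. Delta (Suc n) m a * f a) \<in> Alg (Suc n) m" using fm fx fy by (rule sym_Delta_Alg)
    then show ?thesis using True by simp
  next
    case False
    then have m: "0 < m" by simp
    have "(\<lambda>a. f (a(X n := 0))) \<in> Alg n m" by (rule Suc.IH[OF SS_restrict[OF Suc.prems]])
    then obtain G where G: "G \<in> Alg (Suc n) m" "\<And>a. G (a(X n := 0)) = f (a(X n := 0))"
      using Alg_lift by blast
    have Gm: "G \<in> mpoly_fun (vars (Suc n) m)" and Gs: "symX (Suc n) G" "symY m G" "super (Suc n) m G"
      using Alg_mpoly[OF G(1)] Alg_sym[OF G(1)] by auto
    define h where "h a = f a - G a" for a
    have hm: "h \<in> mpoly_fun (vars (Suc n) m)" unfolding h_def[abs_def] by (rule mp_diff[OF fm Gm])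
    have hx: "symX (Suc n) h" using fx Gs(1) by (simp add: symX_def h_def)
    have hy: "symY m h" using fy Gs(2) by (simp add: symY_def h_def)
    have hs: "h (a(X 0 := s, Y 0 := s)) = h (a(X 0 := t, Y 0 := t))" for a s t
      using fs Gs(3) m unfolding super_def h_def by (metis zero_less_Suc)
    have h0: "h (a(X n := 0)) = 0" for a unfolding h_def using G(2) by simp
    have hX: "h a = 0" if i: "i < Suc n" and z: "a (X i) = 0" for a i
    proof -
      let ?t = "Transposition.transpose i n"
      have t: "?t permutes {..<Suc n}" using i by (intro permutes_swap_id) auto
      let ?b = "permX ?t a"
      have "?b (X n) = 0" using z by simp
      then have "?b = ?b(X n := 0)" by auto
      then have "h ?b = 0" using h0[of ?b] by simp
      moreover have "h ?b = h a" using hx t by (simp add: symX_def)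
      ultimately show ?thesis by simp
    qed
    have hv: "h a = 0" if i: "i < Suc n" and j: "j < m" and eq: "a (Y j) = a (X i)" for a i j
    proof -
      let ?t = "Transposition.transpose 0 i" and ?r = "Transposition.transpose 0 j"
      have t: "?t permutes {..<Suc n}" using i by (intro permutes_swap_id) auto
      have r: "?r permutes {..<m}" using j m by (intro permutes_swap_id) auto
      let ?b = "permY ?r (permX ?t a)"
      have "h a = h (permX ?t a)" using hx t by (simp add: symX_def)
      also have "\<dots> = h ?b" using hy r by (simp add: symY_def)
      also have "?b = ?b(X 0 := a (X i), Y 0 := a (X i))" using eq by auto
      also have "h \<dots> = h (?b(X 0 := 0, Y 0 := 0))" by (rule hs)
      also have "\<dots> = 0" by (rule hX[of 0]) auto
      finally show ?thesis .
    qed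
    obtain k where k: "k \<in> mpoly_fun (vars (Suc n) m)" "h = (\<lambda>a. Delta (Suc n) m a * k a)"
      using Delta_div[OF hm] hv by blast
    have ks: "symX (Suc n) k \<and> symY m k"
      by (rule quot_sym[OF k(1) _ hx hy]) (simp add: k(2))
    have "(\<lambda>a. Delta (Suc n) m a * k a) \<in> Alg (Suc n) m"
      using ks by (intro sym_Delta_Alg k(1)) auto
    then have "h \<in> Alg (Suc n) m" using k(2) by simp
    then have "(\<lambda>a. G a + h a) \<in> Alg (Suc n) m" using G(1) by (intro Alg.add)
    moreover have "(\<lambda>a. G a + h a) = f" by (auto simp: h_def)
    ultimately show ?thesis by simp
  qed
qed

lemma mon_flip:
  assumes "finite W" "w \<in> W"
  shows "mon W \<beta> (a(w := - a w)) = (-1) ^ \<beta> w * mon W \<beta> a"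
proof -
  have "mon W \<beta> (a(w := - a w)) = (\<Prod>v\<in>W. (if v = w then (-1) ^ \<beta> w else 1) * a v ^ \<beta> v)"
    unfolding mon_def
  proof (intro prod.cong refl)
    fix v show "(a(w := - a w)) v ^ \<beta> v = (if v = w then (-1) ^ \<beta> w else 1) * a v ^ \<beta> v"
      by (cases "v = w") (simp_all add: power_minus[of "a w"])
  qed
  also have "\<dots> = (\<Prod>v\<in>W. (if v = w then (-1) ^ \<beta> w else 1)) * mon W \<beta> a"
    unfolding mon_def by (simp add: prod.distrib)
  also have "(\<Prod>v\<in>W. (if v = w then (-1) ^ \<beta> w else 1)) = ((-1::complex) ^ \<beta> w)"
    using assms by (simp add: prod.delta)
  finally show ?thesis .
qed

lemma even_filter:
  assumes W: "finite W" and fe: "\<And>v a. v \<in> W \<Longrightarrow> f (a(v := - a v)) = f a"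
    and L: "\<And>a. f a = (\<Sum>x\<leftarrow>L. fst x * mon W (snd x) a)"
    and W': "W' \<subseteq> W"
  shows "f a = (\<Sum>x\<leftarrow>L. if (\<forall>w\<in>W'. even (snd x w)) then fst x * mon W (snd x) a else 0)"
proof -
  have "finite W'" using W W' by (rule finite_subset[rotated])
  then show ?thesis using W'
  proof (induction W' arbitrary: a rule: finite_induct)
    case empty then show ?case using L by simp
  next
    case (insert w W')
    have w: "w \<in> W" using insert.prems by auto
    let ?T = "\<lambda>x a. if (\<forall>w\<in>W'. even (snd x w)) then fst x * mon W (snd x) a else 0"
    have "f a = (f a + f (a(w := - a w))) / 2" using fe[OF w] by simp
    also have "\<dots> = ((\<Sum>x\<leftarrow>L. ?T x a) + (\<Sum>x\<leftarrow>L. ?T x (a(w := - a w)))) / 2"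
    proof -
      have W'W: "W' \<subseteq> W" using insert.prems by auto
      have e1: "f a = (\<Sum>x\<leftarrow>L. ?T x a)" by (rule insert.IH[OF W'W])
      have e2: "f (a(w := - a w)) = (\<Sum>x\<leftarrow>L. ?T x (a(w := - a w)))" by (rule insert.IH[OF W'W])
      show ?thesis by (simp only: e1 e2)
    qed
    also have "\<dots> = (\<Sum>x\<leftarrow>L. (?T x a + ?T x (a(w := - a w))) / 2)"
      by (induction L) (auto simp: field_simps)
    also have "\<dots> = (\<Sum>x\<leftarrow>L. if (\<forall>w\<in>insert w W'. even (snd x w)) then fst x * mon W (snd x) a else 0)"
    proof (intro arg_cong[where f=sum_list] map_cong refl)
      fix x
      show "(?T x a + ?T x (a(w := - a w))) / 2 = (if (\<forall>w\<in>insert w W'. even (snd x w)) then fst x * mon W (snd x) a else 0)"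
        by (cases "even (snd x w)") (auto simp: mon_flip[OF W w])
    qed
    finally show ?case .
  qed
qed

definition sqpt :: "pt \<Rightarrow> pt" where "sqpt b = (\<lambda>v. (b v)\<^sup>2)"
definition rtpt :: "pt \<Rightarrow> pt" where "rtpt a = (\<lambda>v. csqrt (a v))"

lemma sq_rt [simp]: "sqpt (rtpt a) = a"
  by (simp add: sqpt_def rtpt_def)

lemma sq_permX: "sqpt (permX \<sigma> b) = permX \<sigma> (sqpt b)"
  by (rule ext, case_tac x) (auto simp: sqpt_def permX_def)
lemma sq_permY: "sqpt (permY \<sigma> b) = permY \<sigma> (sqpt b)"
  by (rule ext, case_tac x) (auto simp: sqpt_def permY_def)
lemma sq_upd: "sqpt (b(v := c)) = (sqpt b)(v := c\<^sup>2)"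
  by (auto simp: sqpt_def)

lemma avars_vars: "avars p q = vars p q"
  by (simp add: avars_def vars_def)

lemma Lambda0_sq:
  assumes f: "f \<in> Lambda0_a p q" and q: "1 \<le> q"
  shows "\<exists>F\<in>SS p q. f = (\<lambda>b. F (sqpt b))"
proof -
  let ?W = "avars p q"
  have fin: "finite ?W" by (simp add: avars_def)
  have fm: "f \<in> mpoly_fun ?W" and fx: "\<And>\<sigma> a. \<sigma> permutes {..<p} \<Longrightarrow> f (permX \<sigma> a) = f a"
    and fy: "\<And>\<sigma> a. \<sigma> permutes {..<q} \<Longrightarrow> f (permY \<sigma> a) = f a"
    and fe: "\<And>v a. v \<in> ?W \<Longrightarrow> f (a(v := - a v)) = f a"
    and fs: "\<And>a t s. f (a(X 0 := t, Y 0 := - t)) = f (a(X 0 := s, Y 0 := - s))"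
    using f unfolding Lambda0_a_def by auto
  obtain L0 where L0: "\<forall>x\<in>set L0. fst x \<in> mpoly_fun {}" "\<forall>a. f a = (\<Sum>x\<leftarrow>L0. fst x a * mon ?W (snd x) a)"
    using mp_expand[OF fm, of "{}" ?W] fin by auto
  define L where "L = map (\<lambda>x. (fst x undefined, snd x)) L0"
  have c: "fst x a = fst x undefined" if "x \<in> set L0" for x a
    using mp_empty[of "fst x" undefined] L0(1) that by metis
  have fL: "f a = (\<Sum>x\<leftarrow>L. fst x * mon ?W (snd x) a)" for a
  proof -
    have "f a = (\<Sum>x\<leftarrow>L0. fst x a * mon ?W (snd x) a)" using L0(2) by blast
    also have "\<dots> = (\<Sum>x\<leftarrow>L0. fst x undefined * mon ?W (snd x) a)"
      by (intro arg_cong[where f=sum_list] map_cong refl) (use c in metis)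
    finally show ?thesis by (simp add: L_def o_def)
  qed
  have fE: "f a = (\<Sum>x\<leftarrow>L. if (\<forall>w\<in>?W. even (snd x w)) then fst x * mon ?W (snd x) a else 0)" for a
    by (rule even_filter[OF fin fe fL]) auto
  define F where "F a = (\<Sum>x\<leftarrow>L. if (\<forall>w\<in>?W. even (snd x w)) then fst x * mon ?W (\<lambda>w. snd x w div 2) a else 0)" for a
  have Fsq: "F (sqpt b) = f b" for b
  proof -
    have "mon ?W (\<lambda>w. snd x w div 2) (sqpt b) = mon ?W (snd x) b" if "\<forall>w\<in>?W. even (snd x w)" for x
      unfolding mon_def sqpt_def
    proof (intro prod.cong refl)
      fix w assume "w \<in> ?W"
      then have "even (snd x w)" using that by auto
      then show "(b w)\<^sup>2 ^ (snd x w div 2) = b w ^ snd x w"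
        by (metis power_mult dvd_mult_div_cancel)
    qed
    then show ?thesis unfolding F_def fE[of b] by (intro arg_cong[where f=sum_list] map_cong refl) auto
  qed
  have Fm: "F \<in> mpoly_fun ?W"
    unfolding F_def[abs_def]
  proof (rule mp_sum_list)
    fix x assume "x \<in> set L"
    show "(\<lambda>a. if (\<forall>w\<in>?W. even (snd x w)) then fst x * mon ?W (\<lambda>w. snd x w div 2) a else 0) \<in> mpoly_fun ?W"
    proof (cases "\<forall>w\<in>?W. even (snd x w)")
      case True show ?thesis unfolding if_P[OF True] by (rule mp_mult[OF mp_const mon_mpoly[OF fin]])
    next
      case False show ?thesis unfolding if_not_P[OF False] by (rule mp_const)
    qed
  qed
  have Fr: "F a = f (rtpt a)" for a using Fsq[of "rtpt a"] by simp
  have Fx: "symX p F" unfolding symX_def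
  proof (intro allI impI)
    fix \<sigma> a assume s: "\<sigma> permutes {..<p}"
    have "F (permX \<sigma> a) = F (sqpt (permX \<sigma> (rtpt a)))" by (simp add: sq_permX)
    also have "\<dots> = f (permX \<sigma> (rtpt a))" by (rule Fsq)
    also have "\<dots> = f (rtpt a)" by (rule fx[OF s])
    finally show "F (permX \<sigma> a) = F a" using Fr by simp
  qed
  have Fy: "symY q F" unfolding symY_def
  proof (intro allI impI)
    fix \<sigma> a assume s: "\<sigma> permutes {..<q}"
    have "F (permY \<sigma> a) = F (sqpt (permY \<sigma> (rtpt a)))" by (simp add: sq_permY)
    also have "\<dots> = f (permY \<sigma> (rtpt a))" by (rule Fsq)
    also have "\<dots> = f (rtpt a)" by (rule fy[OF s])
    finally show "F (permY \<sigma> a) = F a" using Fr by simp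
  qed
  have Fs0: "F (a(X 0 := s, Y 0 := s)) = F (a(X 0 := 0, Y 0 := 0))" if p: "0 < p" for a s
  proof -
    let ?r = "rtpt a"
    have Y0: "Y 0 \<in> ?W" using q by (auto simp: avars_def)
    have "F (a(X 0 := s, Y 0 := s)) = F (sqpt (?r(X 0 := csqrt s, Y 0 := csqrt s)))"
      by (simp add: sq_upd)
    also have "\<dots> = f (?r(X 0 := csqrt s, Y 0 := csqrt s))" by (rule Fsq)
    also have "\<dots> = f ((?r(X 0 := csqrt s, Y 0 := csqrt s))(Y 0 := - (?r(X 0 := csqrt s, Y 0 := csqrt s)) (Y 0)))"
      by (rule fe[OF Y0, symmetric])
    also have "(?r(X 0 := csqrt s, Y 0 := csqrt s))(Y 0 := - (?r(X 0 := csqrt s, Y 0 := csqrt s)) (Y 0)) = ?r(X 0 := csqrt s, Y 0 := - csqrt s)"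
      by auto
    also have "f \<dots> = f (?r(X 0 := 0, Y 0 := - 0))" by (rule fs)
    also have "\<dots> = F (sqpt (?r(X 0 := 0, Y 0 := 0)))" using Fsq by simp
    also have "sqpt (?r(X 0 := 0, Y 0 := 0)) = a(X 0 := 0, Y 0 := 0)" by (simp add: sq_upd)
    finally show ?thesis .
  qed
  have Fs: "super p q F" unfolding super_def using Fs0 by metis
  have "F \<in> SS p q" using Fm Fx Fy Fs by (simp add: SS_def avars_vars)
  moreover have "f = (\<lambda>b. F (sqpt b))" using Fsq by auto
  ultimately show ?thesis by blast
qed

definition hgen :: "nat \<Rightarrow> nat \<Rightarrow> pt \<Rightarrow> complex fps" where
  "hgen p q a = (\<Prod>k<2*p. 1 - fps_const (2 * a (X k)) * fps_X) * inverse (\<Prod>k<2*q. 1 - fps_const (- 2 * a (Y k)) * fps_X)"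

definition Gr :: "nat \<Rightarrow> nat \<Rightarrow> nat \<Rightarrow> pf" where
  "Gr p q r = (\<lambda>a. fps_nth (hgen p q a) (2 * r))"

lemma Gr_mpoly: "Gr p q r \<in> mpoly_fun (hvars p q)"
  unfolding Gr_def hgen_def
  by (intro coeff_mult[OF ringset_mpoly] coeff_prod[OF ringset_mpoly] coeff_inverse[OF ringset_mpoly]
      coeff_lin[OF ringset_mpoly] mp_cmult mp_var) (auto simp: hvars_def prod_lin_0)

lemma hgen_permX: "\<sigma> permutes {..<2*p} \<Longrightarrow> hgen p q (permX \<sigma> a) = hgen p q a"
  unfolding hgen_def
  using prod.permute[of \<sigma> "{..<2*p}" "\<lambda>i. 1 - fps_const (2 * a (X i)) * fps_X"]
  by (simp add: o_def)
lemma hgen_permY: "\<sigma> permutes {..<2*q} \<Longrightarrow> hgen p q (permY \<sigma> a) = hgen p q a"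
  unfolding hgen_def
  using prod.permute[of \<sigma> "{..<2*q}" "\<lambda>i. 1 - fps_const (- 2 * a (Y i)) * fps_X"]
  by (simp add: o_def)

lemma hgen_super:
  assumes "0 < p" "0 < q"
  shows "hgen p q (a(X 0 := t, Y 0 := - t)) = (\<Prod>k\<in>{1..<2*p}. 1 - fps_const (2 * a (X k)) * fps_X) * inverse (\<Prod>k\<in>{1..<2*q}. 1 - fps_const (- 2 * a (Y k)) * fps_X)"
proof -
  have n: "{..<2*p} = insert 0 {1..<2*p}" and m: "{..<2*q} = insert 0 {1..<2*q}" using assms by auto
  let ?A = "\<Prod>k\<in>{1..<2*p}. 1 - fps_const (2 * a (X k)) * fps_X"
  let ?B = "\<Prod>k\<in>{1..<2*q}. 1 - fps_const (- 2 * a (Y k)) * fps_X"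
  let ?l = "1 - fps_const (2 * t) * fps_X :: complex fps"
  have A: "(\<Prod>k<2*p. 1 - fps_const (2 * (a(X 0 := t, Y 0 := - t)) (X k)) * fps_X) = ?l * ?A"
    unfolding n by (subst prod.insert) (auto intro!: prod.cong)
  have B: "(\<Prod>k<2*q. 1 - fps_const (- 2 * (a(X 0 := t, Y 0 := - t)) (Y k)) * fps_X) = ?l * ?B"
    unfolding m by (subst prod.insert) (auto intro!: prod.cong)
  have l: "?l * inverse ?l = 1" by (rule inverse_mult_eq_1') simp
  have "?l * ?A * (inverse ?l * inverse ?B) = (?l * inverse ?l) * (?A * inverse ?B)"
    by (simp only: mult_ac)
  then show ?thesis unfolding hgen_def A B fps_inverse_mult l by simp
qed

lemma Gr_Lambda: assumes "1 \<le> p" "1 \<le> q" shows "Gr p q r \<in> Lambda_h p q"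
proof -
  have "\<forall>\<sigma> a. \<sigma> permutes {..<2*p} \<longrightarrow> Gr p q r (permX \<sigma> a) = Gr p q r a"
    by (auto simp: Gr_def hgen_permX)
  moreover have "\<forall>\<sigma> a. \<sigma> permutes {..<2*q} \<longrightarrow> Gr p q r (permY \<sigma> a) = Gr p q r a"
    by (auto simp: Gr_def hgen_permY)
  moreover have "\<forall>a t s. Gr p q r (a(X 0 := t, Y 0 := - t)) = Gr p q r (a(X 0 := s, Y 0 := - s))"
    using assms by (auto simp: Gr_def hgen_super)
  ultimately show ?thesis unfolding Lambda_h_def using Gr_mpoly by blast
qed

lemma prod_split2:
  fixes f :: "nat \<Rightarrow> 'a::comm_monoid_mult" and p :: nat
  shows "(\<Prod>k<2*p. f k) = (\<Prod>i<p. f i * f (p + i))"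
proof -
  have e: "{..<2*p} = {..<p} \<union> (\<lambda>i. p + i) ` {..<p}"
  proof
    show "{..<2*p} \<subseteq> {..<p} \<union> (\<lambda>i. p + i) ` {..<p}"
    proof
      fix k assume "k \<in> {..<2*p}"
      then show "k \<in> {..<p} \<union> (\<lambda>i. p + i) ` {..<p}"
        by (cases "k < p") (auto intro!: image_eqI[of _ _ "k - p"])
    qed
  qed auto
  have "(\<Prod>k<2*p. f k) = (\<Prod>k<p. f k) * (\<Prod>k\<in>(\<lambda>i. p + i) ` {..<p}. f k)"
    unfolding e by (rule prod.union_disjoint) auto
  also have "(\<Prod>k\<in>(\<lambda>i. p + i) ` {..<p}. f k) = (\<Prod>i<p. f (p + i))"
    by (subst prod.reindex) (auto simp: inj_on_def)
  finally show ?thesis by (simp add: prod.distrib)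
qed

lemma restr_X: "i < p \<Longrightarrow> restr_pt p q b (X i) = b (X i) / 2"
  and restr_X2: "i < p \<Longrightarrow> restr_pt p q b (X (p + i)) = - b (X i) / 2"
  and restr_Y: "j < q \<Longrightarrow> restr_pt p q b (Y j) = b (Y j) / 2"
  and restr_Y2: "j < q \<Longrightarrow> restr_pt p q b (Y (q + j)) = - b (Y j) / 2"
  by (auto simp: restr_pt_def)

lemma X2: "fps_nth ((fps_X :: complex fps) ^ 2) 0 = 0" by simp

lemma lin_compose: "(1 - fps_const c * fps_X) oo (fps_X ^ 2) = 1 - fps_const c * (fps_X ^ 2 :: complex fps)"
  by (simp add: fps_compose_sub_distrib fps_compose_mult_distrib[OF X2])

lemma ring_pair: "(1 - C * x) * (1 - (- C) * x) = (1 - C * C * x ^ 2 :: complex fps)"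
  by (simp add: algebra_simps power2_eq_square)

lemma fc_sq: "fps_const (c\<^sup>2) = fps_const c * (fps_const c :: complex fps)"
  by (simp only: power2_eq_square fps_const_mult)

lemma pair_fac: "(1 - fps_const (2 * (c / 2)) * fps_X) * (1 - fps_const (2 * (- c / 2)) * fps_X) = (1 - fps_const (c\<^sup>2) * (fps_X ^ 2 :: complex fps))"
proof -
  have 1: "fps_const (2 * (c / 2)) = (fps_const c :: complex fps)" by simp
  have 2: "fps_const (2 * (- c / 2)) = - (fps_const c :: complex fps)" by simp
  show ?thesis unfolding 1 2 fc_sq by (rule ring_pair)
qed

lemma pair_facY: "(1 - fps_const (- 2 * (c / 2)) * fps_X) * (1 - fps_const (- 2 * (- c / 2)) * fps_X) = (1 - fps_const (c\<^sup>2) * (fps_X ^ 2 :: complex fps))"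
proof -
  have 1: "fps_const (- 2 * (c / 2)) = - (fps_const c :: complex fps)" by simp
  have 2: "fps_const (- 2 * (- c / 2)) = (fps_const c :: complex fps)" by simp
  have "(1 - (- fps_const c) * fps_X) * (1 - fps_const c * fps_X) = (1 - fps_const c * fps_const c * (fps_X ^ 2 :: complex fps))"
    by (subst mult.commute) (rule ring_pair)
  then show ?thesis unfolding 1 2 fc_sq .
qed

lemma hgen_restr: "hgen p q (restr_pt p q b) = genfps p q (sqpt b) oo (fps_X ^ 2)"
proof -
  have A: "(\<Prod>k<2*p. 1 - fps_const (2 * restr_pt p q b (X k)) * fps_X) = (\<Prod>i<p. 1 - fps_const ((b (X i))\<^sup>2) * fps_X ^ 2)"
    unfolding prod_split2
  proof (intro prod.cong refl)
    fix i assume "i \<in> {..<p}" then have i: "i < p" by simp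
    show "(1 - fps_const (2 * restr_pt p q b (X i)) * fps_X) * (1 - fps_const (2 * restr_pt p q b (X (p + i))) * fps_X)
        = 1 - fps_const ((b (X i))\<^sup>2) * fps_X ^ 2"
      unfolding restr_X[OF i] restr_X2[OF i] by (rule pair_fac)
  qed
  have B: "(\<Prod>k<2*q. 1 - fps_const (- 2 * restr_pt p q b (Y k)) * fps_X) = (\<Prod>i<q. 1 - fps_const ((b (Y i))\<^sup>2) * fps_X ^ 2)"
    unfolding prod_split2
  proof (intro prod.cong refl)
    fix i assume "i \<in> {..<q}" then have i: "i < q" by simp
    show "(1 - fps_const (- 2 * restr_pt p q b (Y i)) * fps_X) * (1 - fps_const (- 2 * restr_pt p q b (Y (q + i))) * fps_X)
        = 1 - fps_const ((b (Y i))\<^sup>2) * fps_X ^ 2"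
      unfolding restr_Y[OF i] restr_Y2[OF i] by (rule pair_facY)
  qed
  have C: "(\<Prod>i<n. 1 - fps_const (c i) * fps_X) oo (fps_X ^ 2) = (\<Prod>i<n. 1 - fps_const (c i) * (fps_X ^ 2 :: complex fps))" for n c
    by (simp add: fps_compose_prod_distrib[OF X2] lin_compose)
  have "genfps p q (sqpt b) oo (fps_X ^ 2) = ((\<Prod>i<p. 1 - fps_const ((b (X i))\<^sup>2) * fps_X) oo fps_X ^ 2) *
     (inverse (\<Prod>j<q. 1 - fps_const ((b (Y j))\<^sup>2) * fps_X) oo fps_X ^ 2)"
    unfolding genfps_def sqpt_def by (rule fps_compose_mult_distrib[OF X2])
  also have "inverse (\<Prod>j<q. 1 - fps_const ((b (Y j))\<^sup>2) * fps_X) oo fps_X ^ 2 = inverse ((\<Prod>j<q. 1 - fps_const ((b (Y j))\<^sup>2) * fps_X) oo fps_X ^ 2)"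
    by (rule fps_inverse_compose[OF X2]) (simp add: prod_lin_0)
  finally show ?thesis unfolding hgen_def A B C by simp
qed

lemma compose_X2_nth: "fps_nth (E oo (fps_X ^ 2)) (2 * r) = fps_nth E r"
proof -
  have "fps_nth (E oo (fps_X ^ 2)) (2 * r) = (\<Sum>i=0..2*r. fps_nth E i * (if 2 * r = 2 * i then 1 else 0))"
    by (simp add: fps_compose_nth power_mult[symmetric])
  also have "\<dots> = (\<Sum>i=0..2*r. if i = r then fps_nth E i else 0)"
    by (intro sum.cong refl) auto
  also have "\<dots> = fps_nth E r" by (subst sum.delta) auto
  finally show ?thesis .
qed

lemma Res_Gr: "Res p q (Gr p q r) = (\<lambda>b. Egen p q r (sqpt b))"
  unfolding Res_def Gr_def Egen_def hgen_restr compose_X2_nth ..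

lemma Lambda_h_const: "(\<lambda>a. c) \<in> Lambda_h p q"
  unfolding Lambda_h_def by (auto intro: mp_const)
lemma Lambda_h_add: "F \<in> Lambda_h p q \<Longrightarrow> G \<in> Lambda_h p q \<Longrightarrow> (\<lambda>a. F a + G a) \<in> Lambda_h p q"
  unfolding Lambda_h_def by (auto intro: mp_add) (metis)
lemma Lambda_h_mult: "F \<in> Lambda_h p q \<Longrightarrow> G \<in> Lambda_h p q \<Longrightarrow> (\<lambda>a. F a * G a) \<in> Lambda_h p q"
  unfolding Lambda_h_def by (auto intro: mp_mult) (metis)

lemma Alg_lift_h:
  assumes "1 \<le> p" "1 \<le> q" "g \<in> Alg p q"
  shows "\<exists>G\<in>Lambda_h p q. (\<lambda>b. g (sqpt b)) = Res p q G"
  using assms(3)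
proof (induction rule: Alg.induct)
  case (const c) then show ?case by (intro bexI[of _ "\<lambda>a. c"]) (auto simp: Res_def Lambda_h_const)
next
  case (gen r) show ?case
    by (rule bexI[of _ "Gr p q r"]) (simp_all add: Res_Gr Gr_Lambda[OF assms(1,2)])
next
  case (add f g)
  then obtain F G where "F \<in> Lambda_h p q" "G \<in> Lambda_h p q" "(\<lambda>b. f (sqpt b)) = Res p q F" "(\<lambda>b. g (sqpt b)) = Res p q G" by blast
  then show ?case
    by (intro bexI[of _ "\<lambda>a. F a + G a"]) (auto simp: Res_def Lambda_h_add fun_eq_iff)
next
  case (mult f g)
  then obtain F G where "F \<in> Lambda_h p q" "G \<in> Lambda_h p q" "(\<lambda>b. f (sqpt b)) = Res p q F" "(\<lambda>b. g (sqpt b)) = Res p q G" by blast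
  then show ?case
    by (intro bexI[of _ "\<lambda>a. F a * G a"]) (auto simp: Res_def Lambda_h_mult fun_eq_iff)
qed

definition dbl :: "nat \<Rightarrow> (nat \<Rightarrow> nat) \<Rightarrow> nat \<Rightarrow> nat" where
  "dbl p \<sigma> = (\<lambda>k. if k < p then \<sigma> k else if k < 2 * p then p + \<sigma> (k - p) else k)"

lemma dbl_inv:
  assumes s: "\<sigma> permutes {..<p}" and k: "k < 2 * p"
  shows "dbl p (Hilbert_Choice.inv \<sigma>) (dbl p \<sigma> k) = k" and "dbl p \<sigma> k < 2 * p"
proof -
  have si: "Hilbert_Choice.inv \<sigma> permutes {..<p}" using s by (rule permutes_inv)
  show "dbl p (Hilbert_Choice.inv \<sigma>) (dbl p \<sigma> k) = k"
  proof (cases "k < p")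
    case True
    then show ?thesis using permutes_lt[OF s True] permutes_inverses(2)[OF s] by (simp add: dbl_def)
  next
    case False
    then have "k - p < p" using k by simp
    then show ?thesis using False k permutes_lt[OF s \<open>k - p < p\<close>] permutes_inverses(2)[OF s] by (simp add: dbl_def)
  qed
  show "dbl p \<sigma> k < 2 * p"
  proof (cases "k < p")
    case True then show ?thesis using permutes_lt[OF s True] by (simp add: dbl_def)
  next
    case False
    then have "k - p < p" using k by simp
    then show ?thesis using False k permutes_lt[OF s \<open>k - p < p\<close>] by (simp add: dbl_def)
  qed
qed

lemma dbl_permutes:
  assumes s: "\<sigma> permutes {..<p}"
  shows "dbl p \<sigma> permutes {..<2 * p}"
proof (rule bij_imp_permutes)
  have si: "Hilbert_Choice.inv \<sigma> permutes {..<p}" using s by (rule permutes_inv)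
  have ii: "Hilbert_Choice.inv (Hilbert_Choice.inv \<sigma>) = \<sigma>" using s by (simp add: permutes_inv_inv)
  show "bij_betw (dbl p \<sigma>) {..<2 * p} {..<2 * p}"
  proof (rule bij_betwI[where g="dbl p (Hilbert_Choice.inv \<sigma>)"])
    show "dbl p \<sigma> \<in> {..<2 * p} \<rightarrow> {..<2 * p}" using dbl_inv(2)[OF s] by auto
    show "dbl p (Hilbert_Choice.inv \<sigma>) \<in> {..<2 * p} \<rightarrow> {..<2 * p}" using dbl_inv(2)[OF si] by auto
    show "dbl p (Hilbert_Choice.inv \<sigma>) (dbl p \<sigma> x) = x" if "x \<in> {..<2 * p}" for x
      using dbl_inv(1)[OF s] that by auto
    show "dbl p \<sigma> (dbl p (Hilbert_Choice.inv \<sigma>) y) = y" if "y \<in> {..<2 * p}" for y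
      using dbl_inv(1)[OF si] that ii by auto
  qed
  show "\<And>x. x \<notin> {..<2 * p} \<Longrightarrow> dbl p \<sigma> x = x" by (auto simp: dbl_def)
qed

lemma restr_permX:
  assumes s: "\<sigma> permutes {..<p}"
  shows "restr_pt p q (permX \<sigma> b) = permX (dbl p \<sigma>) (restr_pt p q b)"
proof
  fix v show "restr_pt p q (permX \<sigma> b) v = permX (dbl p \<sigma>) (restr_pt p q b) v"
  proof (cases v)
    case (X k)
    show ?thesis
    proof (cases "k < p")
      case True then show ?thesis using X permutes_lt[OF s True] by (simp add: restr_pt_def dbl_def)
    next
      case False
      show ?thesis
      proof (cases "k < 2 * p")
        case True
        then have "k - p < p" using False by simp
        then show ?thesis using X False True permutes_lt[OF s \<open>k - p < p\<close>] by (simp add: restr_pt_def dbl_def)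
      next
        case False2: False
        have "\<sigma> (k - p) = k - p" using permutes_not_in[OF s] False2 by simp
        then show ?thesis using X False False2 by (simp add: restr_pt_def dbl_def)
      qed
    qed
  qed (simp add: restr_pt_def)
qed

lemma restr_permY:
  assumes s: "\<sigma> permutes {..<q}"
  shows "restr_pt p q (permY \<sigma> b) = permY (dbl q \<sigma>) (restr_pt p q b)"
proof
  fix v show "restr_pt p q (permY \<sigma> b) v = permY (dbl q \<sigma>) (restr_pt p q b) v"
  proof (cases v)
    case (Y k)
    show ?thesis
    proof (cases "k < q")
      case True then show ?thesis using Y permutes_lt[OF s True] by (simp add: restr_pt_def dbl_def)
    next
      case False
      show ?thesis
      proof (cases "k < 2 * q")
        case True
        then have "k - q < q" using False by simp
        then show ?thesis using Y False True permutes_lt[OF s \<open>k - q < q\<close>] by (simp add: restr_pt_def dbl_def)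
      next
        case False2: False
        have "\<sigma> (k - q) = k - q" using permutes_not_in[OF s] False2 by simp
        then show ?thesis using Y False False2 by (simp add: restr_pt_def dbl_def)
      qed
    qed
  qed (simp add: restr_pt_def)
qed

lemma restr_flipX:
  assumes i: "i < p"
  shows "restr_pt p q (b(X i := - b (X i))) = permX (Transposition.transpose i (p + i)) (restr_pt p q b)"
proof
  fix v show "restr_pt p q (b(X i := - b (X i))) v = permX (Transposition.transpose i (p + i)) (restr_pt p q b) v"
  proof (cases v)
    case (X k)
    then show ?thesis using i by (auto simp: restr_pt_def Transposition.transpose_def)
  qed (simp add: restr_pt_def)
qed

lemma restr_flipY:
  assumes j: "j < q"
  shows "restr_pt p q (b(Y j := - b (Y j))) = permY (Transposition.transpose j (q + j)) (restr_pt p q b)"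
proof
  fix v show "restr_pt p q (b(Y j := - b (Y j))) v = permY (Transposition.transpose j (q + j)) (restr_pt p q b) v"
  proof (cases v)
    case (Y k)
    then show ?thesis using j by (auto simp: restr_pt_def Transposition.transpose_def)
  qed (simp add: restr_pt_def)
qed

lemma Lambda_h_pair:
  assumes G: "G \<in> Lambda_h p q" and k: "k < 2 * p" and l: "l < 2 * q"
  shows "G (a(X k := s, Y l := - s)) = G (a(X k := 0, Y l := 0))"
proof -
  have Gx: "\<And>\<sigma> a. \<sigma> permutes {..<2*p} \<Longrightarrow> G (permX \<sigma> a) = G a"
    and Gy: "\<And>\<sigma> a. \<sigma> permutes {..<2*q} \<Longrightarrow> G (permY \<sigma> a) = G a"
    and Gs: "\<And>a t s. G (a(X 0 := t, Y 0 := - t)) = G (a(X 0 := s, Y 0 := - s))"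
    using G unfolding Lambda_h_def by auto
  let ?t = "Transposition.transpose 0 k" and ?r = "Transposition.transpose 0 l"
  have t: "?t permutes {..<2*p}" using k by (intro permutes_swap_id) auto
  have r: "?r permutes {..<2*q}" using l by (intro permutes_swap_id) auto
  let ?c = "permY ?r (permX ?t a)"
  have e: "permY ?r (permX ?t (a(X k := u, Y l := - u))) = ?c(X 0 := u, Y 0 := - u)" for u
  proof
    fix v show "permY ?r (permX ?t (a(X k := u, Y l := - u))) v = (?c(X 0 := u, Y 0 := - u)) v"
      by (cases v) (auto simp: Transposition.transpose_def)
  qed
  have "G (a(X k := s, Y l := - s)) = G (permY ?r (permX ?t (a(X k := s, Y l := - s))))"
    using Gx[OF t] Gy[OF r] by simp
  also have "\<dots> = G (?c(X 0 := s, Y 0 := - s))" by (simp only: e)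
  also have "\<dots> = G (?c(X 0 := 0, Y 0 := - 0))" by (rule Gs)
  also have "\<dots> = G (permY ?r (permX ?t (a(X k := 0, Y l := - 0))))" by (simp only: e)
  also have "\<dots> = G (a(X k := 0, Y l := - 0))" using Gx[OF t] Gy[OF r] by simp
  finally show ?thesis by simp
qed

lemma Res_in_Lambda0:
  assumes p: "1 \<le> p" and q: "1 \<le> q" and G: "G \<in> Lambda_h p q"
  shows "Res p q G \<in> Lambda0_a p q"
proof -
  have Gm: "G \<in> mpoly_fun (hvars p q)"
    and Gx: "\<And>\<sigma> a. \<sigma> permutes {..<2*p} \<Longrightarrow> G (permX \<sigma> a) = G a"
    and Gy: "\<And>\<sigma> a. \<sigma> permutes {..<2*q} \<Longrightarrow> G (permY \<sigma> a) = G a"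
    using G unfolding Lambda_h_def by auto
  have m: "Res p q G \<in> mpoly_fun (avars p q)"
    unfolding Res_def
  proof (rule mp_subst[OF Gm])
    fix v assume "v \<in> hvars p q"
    then consider k where "v = X k" "k < 2 * p" | k where "v = Y k" "k < 2 * q" by (auto simp: hvars_def)
    then show "(\<lambda>b. restr_pt p q b v) \<in> mpoly_fun (avars p q)"
    proof cases
      case 1
      show ?thesis
      proof (cases "k < p")
        case True
        have eq: "(\<lambda>b. restr_pt p q b v) = (\<lambda>b. (1/2) * b (X k))" using 1 True by (auto simp: restr_pt_def)
        show ?thesis unfolding eq by (rule mp_cmult[OF mp_var]) (use True in \<open>auto simp: avars_def\<close>)
      next
        case False
        have eq: "(\<lambda>b. restr_pt p q b v) = (\<lambda>b. (-1/2) * b (X (k - p)))" using 1 False by (auto simp: restr_pt_def)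
        have "X (k - p) \<in> avars p q" using 1 False by (auto simp: avars_def)
        then show ?thesis unfolding eq by (rule mp_cmult[OF mp_var])
      qed
    next
      case 2
      show ?thesis
      proof (cases "k < q")
        case True
        have eq: "(\<lambda>b. restr_pt p q b v) = (\<lambda>b. (1/2) * b (Y k))" using 2 True by (auto simp: restr_pt_def)
        show ?thesis unfolding eq by (rule mp_cmult[OF mp_var]) (use True in \<open>auto simp: avars_def\<close>)
      next
        case False
        have eq: "(\<lambda>b. restr_pt p q b v) = (\<lambda>b. (-1/2) * b (Y (k - q)))" using 2 False by (auto simp: restr_pt_def)
        have "Y (k - q) \<in> avars p q" using 2 False by (auto simp: avars_def)
        then show ?thesis unfolding eq by (rule mp_cmult[OF mp_var])
      qed
    qed
  qed
  have x: "Res p q G (permX \<sigma> b) = Res p q G b" if "\<sigma> permutes {..<p}" for \<sigma> b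
    unfolding Res_def restr_permX[OF that] using Gx[OF dbl_permutes[OF that]] .
  have y: "Res p q G (permY \<sigma> b) = Res p q G b" if "\<sigma> permutes {..<q}" for \<sigma> b
    unfolding Res_def restr_permY[OF that] using Gy[OF dbl_permutes[OF that]] .
  have e: "Res p q G (b(v := - b v)) = Res p q G b" if "v \<in> avars p q" for v b
  proof -
    from that consider i where "v = X i" "i < p" | j where "v = Y j" "j < q" by (auto simp: avars_def)
    then show ?thesis
    proof cases
      case 1
      have "Transposition.transpose i (p + i) permutes {..<2*p}" using 1 by (intro permutes_swap_id) auto
      then show ?thesis unfolding Res_def 1 restr_flipX[OF 1(2)] by (rule Gx)
    next
      case 2
      have "Transposition.transpose j (q + j) permutes {..<2*q}" using 2 by (intro permutes_swap_id) auto
      then show ?thesis unfolding Res_def 2 restr_flipY[OF 2(2)] by (rule Gy)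
    qed
  qed
  have s: "Res p q G (b(X 0 := t, Y 0 := - t)) = Res p q G (b(X 0 := 0, Y 0 := 0))" for b t
  proof -
    let ?c = "restr_pt p q b"
    have p0: "p \<noteq> 0" and q0: "q \<noteq> 0" using p q by auto
    have r: "restr_pt p q (b(X 0 := u, Y 0 := - u)) = (?c(X p := - u / 2, Y q := - (- u / 2)))(X 0 := u / 2, Y 0 := - (u / 2))" for u
    proof
      fix v show "restr_pt p q (b(X 0 := u, Y 0 := - u)) v = ((?c(X p := - u / 2, Y q := - (- u / 2)))(X 0 := u / 2, Y 0 := - (u / 2))) v"
        using p0 q0 by (cases v) (auto simp: restr_pt_def)
    qed
    have t1: "Res p q G (b(X 0 := t, Y 0 := - t)) = G ((?c(X 0 := 0, Y 0 := 0))(X p := 0, Y q := 0))" for t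
    proof -
      have "Res p q G (b(X 0 := t, Y 0 := - t)) = G ((?c(X p := - t / 2, Y q := - (- t / 2)))(X 0 := t / 2, Y 0 := - (t / 2)))"
        unfolding Res_def r ..
      also have "\<dots> = G ((?c(X p := - t / 2, Y q := - (- t / 2)))(X 0 := 0, Y 0 := 0))"
        by (rule Lambda_h_pair[OF G]) (use p q in auto)
      also have "(?c(X p := - t / 2, Y q := - (- t / 2)))(X 0 := 0, Y 0 := 0) = (?c(X 0 := 0, Y 0 := 0))(X p := - t / 2, Y q := - (- t / 2))"
        using p0 q0 by (auto simp: fun_upd_twist)
      also have "G \<dots> = G ((?c(X 0 := 0, Y 0 := 0))(X p := 0, Y q := 0))"
        by (rule Lambda_h_pair[OF G]) (use p q in auto)
      finally show ?thesis .
    qed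
    have "Res p q G (b(X 0 := 0, Y 0 := - 0)) = G ((?c(X 0 := 0, Y 0 := 0))(X p := 0, Y q := 0))"
      by (rule t1)
    then show ?thesis using t1 by simp
  qed
  have s': "Res p q G (b(X 0 := t, Y 0 := - t)) = Res p q G (b(X 0 := t', Y 0 := - t'))" for b t t'
    using s[of b t] s[of b t'] by simp
  show ?thesis unfolding Lambda0_a_def using m x y e s' by blast
qed

theorem proposition4p2:
  fixes p q :: nat
  assumes "p \<ge> 1" and "q \<ge> 1"
  shows "Res p q ` Lambda_h p q = Lambda0_a p q"
proof
  show "Res p q ` Lambda_h p q \<subseteq> Lambda0_a p q"
    using Res_in_Lambda0[OF assms] by blast
next
  show "Lambda0_a p q \<subseteq> Res p q ` Lambda_h p q"
  proof
    fix f assume f: "f \<in> Lambda0_a p q"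
    obtain F where F: "F \<in> SS p q" "f = (\<lambda>b. F (sqpt b))" using Lambda0_sq[OF f assms(2)] by blast
    have "F \<in> Alg p q" using F(1) by (rule SS_Alg)
    then obtain G where G: "G \<in> Lambda_h p q" "(\<lambda>b. F (sqpt b)) = Res p q G"
      using Alg_lift_h[OF assms] by blast
    show "f \<in> Res p q ` Lambda_h p q" using F(2) G by auto
  qed
qed

end
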